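(* Given a dominant weight $\lambda$ of size $n$, and $\sigma \in F(\lambda+\rho, n)$, we have \begin{equation*} \sum_{(w,T) \in f^{-1}(\sigma)} (-1)^{\ell(wT)}t^{\frac{1}{2}(\ell(w)+\ell(wT)-|T|)}(t-1)^{|T|}=(-1)^{n-a_{0}+\ell(C)}t^{n-a_{0}+\mathrm{inv}(\sigma)}(1-t)^{\mathrm{des}(\sigma)}, \end{equation*} where $C$ is the first column of $\sigma$, and $a_{0}$ is the unique entry of $[n]$ missing from $C$.
   Context: Type $A_{n-1}$ setting: the Weyl group is $W=S_n$ (one-line notation, length function $\ell$, Bruhat order $<$), $(i,j)$ denotes both the root $\epsilon_i-\epsilon_j$ and the transposition of values $i,j$. A dominant weight is identified with a partition $\lambda=(\lambda_1\ge\dots\ge\lambda_{n-1}\ge\lambda_n=0)$; $\rho=(n-1,n-2,\dots,1)$, and $\mu'$ denotes the conjugate partition of $\mu$. For $k<n$ let $\overline{\Gamma}(k)$ be the sequence of transpositions $((1,k+1),(1,k+2),\dots,(1,n),(2,k+1),\dots,(2,n),\dots,(k,k+1),\dots,(k,n))$, and $\overline{\Gamma}'(k)$ the sequence obtained by removing the transposition $(i,k+1)$ at the start of each row $i$. For the partition $\mu=\lambda+\rho$, the chain is $\overline{\Gamma}=\overline{\Gamma}_1\cdots\overline{\Gamma}_{\mu_1}$ with $\overline{\Gamma}_j=\overline{\Gamma}'(\mu'_j)$ if $j=\min\{i:\mu'_i=\mu'_j\}$ and $\overline{\Gamma}_j=\overline{\Gamma}(\mu'_j)$ otherwise. With $m$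 the number of transpositions $r_1,\dots,r_m$ in $\overline{\Gamma}$, $\mathcal{A}(\overline{\Gamma})$ is the set of pairs $(w,T)$, $w\in S_n$, $T=\{k_1<\dots<k_s\}\subseteq[m]$, with $w<wr_{k_1}<wr_{k_1}r_{k_2}<\dots<wr_{k_1}\cdots r_{k_s}$ in Bruhat order; write $wT=wr_{k_1}\cdots r_{k_s}$ and $|T|=s$. The splitting of $\overline{\Gamma}$ into $\overline{\Gamma}_1\cdots\overline{\Gamma}_{\mu_1}$ induces $T=T_1\cdots T_{\mu_1}$; set $\pi_j=wT_1\cdots T_j$. The filling map $f$ sends $(w,T)\in\mathcal{A}(\overline{\Gamma})$ to the filling of shape $\mu$ with $\sigma(i,j)=\pi_j(i)$ (column $j$ consists of the first $\mu'_j$ entries of $\pi_j$). Two cells attack if they are in the same column, or in consecutive columns $(i,j),(k,j+1)$ with $i>k$. $F(\mu,n)$ is the set of fillings $\sigma:\mu\to[n]$ with $\sigma(u)\ne\sigma(v)$ whenever $u,v$ attack, and weakly increasing along rows ($\sigma(u)\le\sigma(r(u))$, $r(u)$ the cell directly right of $u$). $\mathrm{inv}(\sigma)$ is the number of pairs of cells $(u,v)$ with $v=(i,k+1)$, $u=(j,k)$, $i<j$, and $\sigma(u)<\sigma(v)<\sigma(w)$ where $w$ is the cell directly to the right of $u$ if it exists (otherwise only $\sigma(u)<\sigma(v)$ is required); $\mathrm{des}(\sigma)$ is the number of cells $u$ with $\sigma(u)<\sigma(r(u))$. For a column $C$ viewed as a sequence, $\ell(C)$ is its number of inversions (pairs $i<j$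 with $C(i)>C(j)$). *)

theory Defs
  imports "HOL-Combinatorics.Combinatorics"
begin

(* Permutations of [n] are functions nat => nat with  w permutes {1..n};
   w i is the i-th entry in one-line notation. *)

definition perm_len :: "nat \<Rightarrow> (nat \<Rightarrow> nat) \<Rightarrow> nat" where
  "perm_len n w = card {(i,j). 1 \<le> i \<and> i < j \<and> j \<le> n \<and> w j < w i}"

definition bruhat_step :: "nat \<Rightarrow> (nat \<Rightarrow> nat) \<Rightarrow> (nat \<Rightarrow> nat) \<Rightarrow> bool" where
  "bruhat_step n u v \<longleftrightarrow>
     (\<exists>i j. 1 \<le> i \<and> i < j \<and> j \<le> n \<and> v = u \<circ> transpose i j) \<and> perm_len n u < perm_len n v"

definition bruhat_less :: "nat \<Rightarrow> (nat \<Rightarrow> nat) \<Rightarrow> (nat \<Rightarrow> nat) \<Rightarrow> bool" where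
  "bruhat_less n = (bruhat_step n)\<^sup>+\<^sup>+"

definition gbar :: "nat \<Rightarrow> nat \<Rightarrow> (nat \<times> nat) list" where
  "gbar n k = concat (map (\<lambda>i. map (\<lambda>j. (i,j)) [k+1..<n+1]) [1..<k+1])"

definition gbar' :: "nat \<Rightarrow> nat \<Rightarrow> (nat \<times> nat) list" where
  "gbar' n k = concat (map (\<lambda>i. map (\<lambda>j. (i,j)) [k+2..<n+1]) [1..<k+1])"

(* mu :: nat => nat gives the row lengths mu_1,...,mu_n (rows 1..n) *)
definition in_shape :: "nat \<Rightarrow> (nat \<Rightarrow> nat) \<Rightarrow> nat \<Rightarrow> nat \<Rightarrow> bool" where
  "in_shape n mu i j \<longleftrightarrow> 1 \<le> i \<and> i \<le> n \<and> 1 \<le> j \<and> j \<le> mu i"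

definition conj_part :: "nat \<Rightarrow> (nat \<Rightarrow> nat) \<Rightarrow> nat \<Rightarrow> nat" where
  "conj_part n mu j = card {i \<in> {1..n}. j \<le> mu i}"

definition chain_block :: "nat \<Rightarrow> (nat \<Rightarrow> nat) \<Rightarrow> nat \<Rightarrow> (nat \<times> nat) list" where
  "chain_block n mu j =
     (if j = (LEAST i. 1 \<le> i \<and> conj_part n mu i = conj_part n mu j)
      then gbar' n (conj_part n mu j) else gbar n (conj_part n mu j))"

definition alcove_chain :: "nat \<Rightarrow> (nat \<Rightarrow> nat) \<Rightarrow> (nat \<times> nat) list" where
  "alcove_chain n mu = concat (map (chain_block n mu) [1..<mu 1 + 1])"

(* position (0-indexed, exclusive) where block j ends *)
definition block_end :: "nat \<Rightarrow> (nat \<Rightarrow> nat) \<Rightarrow> nat \<Rightarrow> nat" where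
  "block_end n mu j = length (concat (map (chain_block n mu) [1..<j+1]))"

(* w r_{k1} ... r_{ks}, positions of the chain are 0-indexed *)
definition trans_prod :: "(nat \<Rightarrow> nat) \<Rightarrow> (nat \<times> nat) list \<Rightarrow> nat list \<Rightarrow> (nat \<Rightarrow> nat)" where
  "trans_prod w rs ks = foldl (\<lambda>u k. u \<circ> transpose (fst (rs ! k)) (snd (rs ! k))) w ks"

definition wT :: "nat \<Rightarrow> (nat \<Rightarrow> nat) \<Rightarrow> (nat \<Rightarrow> nat) \<Rightarrow> nat set \<Rightarrow> (nat \<Rightarrow> nat)" where
  "wT n mu w T = trans_prod w (alcove_chain n mu) (sorted_list_of_set T)"

definition admissible :: "nat \<Rightarrow> (nat \<Rightarrow> nat) \<Rightarrow> ((nat \<Rightarrow> nat) \<times> nat set) set" where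
  "admissible n mu = {(w,T). w permutes {1..n} \<and> T \<subseteq> {..<length (alcove_chain n mu)} \<and>
     (let ks = sorted_list_of_set T; rs = alcove_chain n mu in
       \<forall>p < length ks. bruhat_less n (trans_prod w rs (take p ks)) (trans_prod w rs (take (Suc p) ks)))}"

(* \<pi>_j = w T_1 ... T_j *)
definition pi_j :: "nat \<Rightarrow> (nat \<Rightarrow> nat) \<Rightarrow> (nat \<Rightarrow> nat) \<Rightarrow> nat set \<Rightarrow> nat \<Rightarrow> (nat \<Rightarrow> nat)" where
  "pi_j n mu w T j = trans_prod w (alcove_chain n mu)
      (filter (\<lambda>k. k < block_end n mu j) (sorted_list_of_set T))"

(* f^{-1}(\<sigma>): fillings compared on the cells of the shape *)
definition fiber :: "nat \<Rightarrow> (nat \<Rightarrow> nat) \<Rightarrow> (nat \<Rightarrow> nat \<Rightarrow> nat) \<Rightarrow> ((nat \<Rightarrow> nat) \<times> nat set) set" where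
  "fiber n mu \<sigma> = {(w,T) \<in> admissible n mu.
      \<forall>i j. in_shape n mu i j \<longrightarrow> pi_j n mu w T j i = \<sigma> i j}"

(* F(mu,n); fillings are functions row => column => value, relevant on cells *)
definition fillings_F :: "nat \<Rightarrow> (nat \<Rightarrow> nat) \<Rightarrow> (nat \<Rightarrow> nat \<Rightarrow> nat) set" where
  "fillings_F n mu = {\<sigma>.
     (\<forall>i j. in_shape n mu i j \<longrightarrow> \<sigma> i j \<in> {1..n}) \<and>
     (\<forall>i k j. in_shape n mu i j \<and> in_shape n mu k j \<and> i \<noteq> k \<longrightarrow> \<sigma> i j \<noteq> \<sigma> k j) \<and>
     (\<forall>i k j. in_shape n mu i j \<and> in_shape n mu k (Suc j) \<and> k < i \<longrightarrow> \<sigma> i j \<noteq> \<sigma> k (Suc j)) \<and>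
     (\<forall>i j. in_shape n mu i j \<and> in_shape n mu i (Suc j) \<longrightarrow> \<sigma> i j \<le> \<sigma> i (Suc j))}"

definition inv_fill :: "nat \<Rightarrow> (nat \<Rightarrow> nat) \<Rightarrow> (nat \<Rightarrow> nat \<Rightarrow> nat) \<Rightarrow> nat" where
  "inv_fill n mu \<sigma> = card {(i,j,k). in_shape n mu i (Suc k) \<and> in_shape n mu j k \<and> i < j \<and>
      \<sigma> j k < \<sigma> i (Suc k) \<and> (in_shape n mu j (Suc k) \<longrightarrow> \<sigma> i (Suc k) < \<sigma> j (Suc k))}"

definition des_fill :: "nat \<Rightarrow> (nat \<Rightarrow> nat) \<Rightarrow> (nat \<Rightarrow> nat \<Rightarrow> nat) \<Rightarrow> nat" where
  "des_fill n mu \<sigma> = card {(i,j). in_shape n mu i j \<and> in_shape n mu i (Suc j) \<and> \<sigma> i j < \<sigma> i (Suc j)}"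

definition first_col_len :: "nat \<Rightarrow> (nat \<Rightarrow> nat) \<Rightarrow> (nat \<Rightarrow> nat \<Rightarrow> nat) \<Rightarrow> nat" where
  "first_col_len n mu \<sigma> = card {(a,b). 1 \<le> a \<and> a < b \<and> b \<le> conj_part n mu 1 \<and> \<sigma> b 1 < \<sigma> a 1}"

definition missing_entry :: "nat \<Rightarrow> (nat \<Rightarrow> nat) \<Rightarrow> (nat \<Rightarrow> nat \<Rightarrow> nat) \<Rightarrow> nat" where
  "missing_entry n mu \<sigma> = (THE a. a \<in> {1..n} \<and> (\<forall>i. in_shape n mu i 1 \<longrightarrow> \<sigma> i 1 \<noteq> a))"

definition lam_rho :: "nat \<Rightarrow> (nat \<Rightarrow> nat) \<Rightarrow> nat \<Rightarrow> nat" where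
  "lam_rho n lam = (\<lambda>i. lam i + (n - i))"

end

theory Submission
  imports Defs
begin

lemma card_filter_sum:
  "finite A \<Longrightarrow> card {x\<in>A. P x} = (\<Sum>x\<in>A. if P x then 1 else 0)"
  by (simp add: sum.inter_filter[symmetric])

lemma perm_len_sum:
  "perm_len n u = (\<Sum>p\<in>{1..n}. \<Sum>q\<in>{1..n}. if p < q \<and> u q < u p then 1 else 0)"
proof -
  have "{(i,j). 1 \<le> i \<and> i < j \<and> j \<le> n \<and> u j < u i} = {x \<in> {1..n}\<times>{1..n}. fst x < snd x \<and> u (snd x) < u (fst x)}"
    by auto
  then have "perm_len n u = card {x \<in> {1..n}\<times>{1..n}. fst x < snd x \<and> u (snd x) < u (fst x)}"
    by (simp add: perm_len_def)
  also have "\<dots> = (\<Sum>x\<in>{1..n}\<times>{1..n}. if fst x < snd x \<and> u (snd x) < u (fst x) then 1 else 0)"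
    by (rule card_filter_sum) simp
  also have "\<dots> = (\<Sum>p\<in>{1..n}. \<Sum>q\<in>{1..n}. if p < q \<and> u q < u p then 1 else 0)"
    by (simp add: sum.cartesian_product split_def)
  finally show ?thesis .
qed

lemma perm_len_int:
  "int (perm_len n u) = (\<Sum>p\<in>{1..n}. \<Sum>q\<in>{1..n}. if p < q \<and> u q < u p then 1 else 0)"
  unfolding perm_len_sum by (simp add: of_nat_sum of_bool_def[symmetric])

lemma sum_reindex_transpose:
  assumes "a \<in> S" "b \<in> S" "finite S"
  shows "(\<Sum>p\<in>S. f (transpose a b p)) = (\<Sum>p\<in>S. (f p :: 'b::comm_monoid_add))"
proof -
  have "bij_betw (transpose a b) S S"
    using permutes_imp_bij[OF permutes_swap_id[OF assms(1,2)]] .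
  then show ?thesis by (rule sum.reindex_bij_betw)
qed

lemma perm_len_swap:
  assumes inj: "inj_on u {1..n}" and ab: "1 \<le> a" "a < b" "b \<le> n" and lt: "u a < u b"
  shows "perm_len n (u \<circ> transpose a b) = perm_len n u + 2 * card {c. a < c \<and> c < b \<and> u a < u c \<and> u c < u b} + 1"
proof -
  define \<tau> where "\<tau> = transpose a b"
  define X where "X = {1..n} - {a,b}"
  define g :: "nat \<Rightarrow> nat \<Rightarrow> int" where
    "g p q = (if \<tau> p < \<tau> q \<and> u q < u p then 1 else 0) - (if p < q \<and> u q < u p then 1 else 0)" for p q
  have aS: "a \<in> {1..n}" and bS: "b \<in> {1..n}" using ab by auto
  have "int (perm_len n (u \<circ> \<tau>)) = (\<Sum>p\<in>{1..n}. \<Sum>q\<in>{1..n}. if p < q \<and> u (\<tau> q) < u (\<tau> p) then 1 else 0)"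
    by (simp add: perm_len_int)
  also have "\<dots> = (\<Sum>p\<in>{1..n}. \<Sum>q\<in>{1..n}. if \<tau> p < \<tau> q \<and> u (\<tau> (\<tau> q)) < u (\<tau> (\<tau> p)) then 1 else 0)"
    apply (subst sum_reindex_transpose[OF aS bS, symmetric, where f="\<lambda>p. \<Sum>q\<in>{1..n}. if p < q \<and> u (\<tau> q) < u (\<tau> p) then 1 else 0", unfolded \<tau>_def[symmetric]])
     apply simp
    apply (rule sum.cong, simp)
    apply (subst sum_reindex_transpose[OF aS bS, symmetric, unfolded \<tau>_def[symmetric]])
     apply simp
    apply simp
    done
  also have "\<dots> = (\<Sum>p\<in>{1..n}. \<Sum>q\<in>{1..n}. if \<tau> p < \<tau> q \<and> u q < u p then 1 else 0)"
    by (simp add: \<tau>_def)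
  finally have e1: "int (perm_len n (u \<circ> \<tau>)) - int (perm_len n u) = (\<Sum>p\<in>{1..n}. \<Sum>q\<in>{1..n}. g p q)"
    by (simp add: perm_len_int g_def sum_subtractf)
  have split: "\<And>F. (\<Sum>p\<in>{1..n}. F p) = F a + F b + (\<Sum>p\<in>X. F p :: int)"
  proof -
    fix F :: "nat \<Rightarrow> int"
    have "{1..n} = insert a (insert b X)" using aS bS by (auto simp: X_def)
    moreover have "a \<notin> insert b X" "b \<notin> X" using ab by (auto simp: X_def)
    moreover have "finite X" by (simp add: X_def)
    ultimately show "(\<Sum>p\<in>{1..n}. F p) = F a + F b + (\<Sum>p\<in>X. F p)"
      by (metis sum.insert finite.insertI add.assoc)
  qed
  have uab: "u a \<noteq> u c" "u b \<noteq> u c" if "c \<in> X" for c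
    using that inj aS bS unfolding X_def inj_on_def by blast+
  have gXX: "g p q = 0" if "p \<in> X" "q \<in> X" for p q
    using that by (simp add: g_def \<tau>_def X_def)
  have gaa: "g a a = 0" "g b b = 0" "g a b = 0" "g b a = 1"
    using ab lt by (auto simp: g_def \<tau>_def)
  have gc: "g a c + g b c + g c a + g c b = (if a < c \<and> c < b \<and> u a < u c \<and> u c < u b then 2 else 0)"
    if "c \<in> X" for c
  proof -
    have c: "c \<noteq> a" "c \<noteq> b" using that by (auto simp: X_def)
    show ?thesis using c uab[OF that] ab lt
      by (auto simp: g_def \<tau>_def transpose_def)
  qed
  have "(\<Sum>p\<in>{1..n}. \<Sum>q\<in>{1..n}. g p q) = 1 + (\<Sum>c\<in>X. g a c + g b c + g c a + g c b)"
    apply (simp only: split)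
    using gXX gaa by (simp add: sum.distrib)
  also have "\<dots> = 1 + (\<Sum>c\<in>X. if a < c \<and> c < b \<and> u a < u c \<and> u c < u b then 2 else 0)"
    by (simp add: gc)
  also have "(\<Sum>c\<in>X. if a < c \<and> c < b \<and> u a < u c \<and> u c < u b then 2 else 0) = 
      2 * int (card {c\<in>X. a < c \<and> c < b \<and> u a < u c \<and> u c < u b})"
    apply (subst card_filter_sum)
     apply (simp add: X_def)
    apply (simp add: sum_distrib_left of_nat_sum)
    apply (rule sum.cong; simp)
    done
  also have "{c\<in>X. a < c \<and> c < b \<and> u a < u c \<and> u c < u b} = {c. a < c \<and> c < b \<and> u a < u c \<and> u c < u b}"
    using ab by (auto simp: X_def)
  finally show ?thesis using e1 unfolding \<tau>_def by linarith
qed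

lemma bruhat_less_len: "bruhat_less n u v \<Longrightarrow> perm_len n u < perm_len n v"
  unfolding bruhat_less_def
  by (induction rule: tranclp.induct) (auto simp: bruhat_step_def)

lemma perm_swap:
  assumes u: "u permutes {1..n}" and ab: "1 \<le> a" "a \<le> n" "1 \<le> b" "b \<le> n"
  shows "u \<circ> transpose a b permutes {1..n}"
proof -
  have "transpose a b permutes {1..n}" using ab by (intro permutes_swap_id) auto
  then show ?thesis using u by (rule permutes_compose)
qed

lemma bruhat_swap_iff:
  assumes u: "u permutes {1..n}" and ab: "1 \<le> a" "a < b" "b \<le> n"
  shows "bruhat_less n u (u \<circ> transpose a b) \<longleftrightarrow> u a < u b"
proof
  have inj: "inj_on u {1..n}" using u by (rule permutes_inj_on)
  assume bl: "bruhat_less n u (u \<circ> transpose a b)"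
  show "u a < u b"
  proof (rule ccontr)
    assume "\<not> u a < u b"
    moreover have "u a \<noteq> u b"
    proof
      assume "u a = u b"
      then have "a = b" using inj ab by (auto dest: inj_onD)
      then show False using ab by simp
    qed
    ultimately have lt: "(u \<circ> transpose a b) a < (u \<circ> transpose a b) b" by simp
    have inj2: "inj_on (u \<circ> transpose a b) {1..n}"
      using perm_swap[OF u, of a b] ab by (intro permutes_inj_on[of _ "{1..n}"]) auto
    have "perm_len n (u \<circ> transpose a b \<circ> transpose a b) > perm_len n (u \<circ> transpose a b)"
      using perm_len_swap[OF inj2 ab lt] by linarith
    then have "perm_len n u > perm_len n (u \<circ> transpose a b)"
      by (simp add: comp_assoc)
    with bruhat_less_len[OF bl] show False by simp
  qed
next
  have inj: "inj_on u {1..n}" using u by (rule permutes_inj_on)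
  assume "u a < u b"
  from perm_len_swap[OF inj ab this] have "perm_len n u < perm_len n (u \<circ> transpose a b)" by simp
  then have "bruhat_step n u (u \<circ> transpose a b)"
    unfolding bruhat_step_def using ab by blast
  then show "bruhat_less n u (u \<circ> transpose a b)"
    unfolding bruhat_less_def by blast
qed

definition stepw :: "'a::comm_ring_1 \<Rightarrow> (nat \<Rightarrow> nat) \<Rightarrow> nat \<times> nat \<Rightarrow> 'a" where
  "stepw t u r = (1 - t) * t ^ card {c. fst r < c \<and> c < snd r \<and> u (fst r) < u c \<and> u c < u (snd r)}"

abbreviation tr :: "nat \<times> nat \<Rightarrow> nat \<Rightarrow> nat" where
  "tr r \<equiv> transpose (fst r) (snd r)"

fun Rf0 :: "'a::comm_ring_1 \<Rightarrow> ((nat \<Rightarrow> nat) \<Rightarrow> 'a) \<Rightarrow> (nat \<times> nat) list \<Rightarrow> (nat \<Rightarrow> nat) \<Rightarrow> 'a" where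
  "Rf0 t E [] u = E u"
| "Rf0 t E (r # rs) u = Rf0 t E rs u +
     (if u (fst r) < u (snd r) then stepw t u r * Rf0 t E rs (u \<circ> tr r) else 0)"

fun Rf :: "'a::comm_ring_1 \<Rightarrow> ((nat \<Rightarrow> nat) \<Rightarrow> 'a) \<Rightarrow> (nat \<Rightarrow> (nat \<Rightarrow> nat) \<Rightarrow> bool) \<Rightarrow> (nat \<times> nat) list \<Rightarrow> nat \<Rightarrow> (nat \<Rightarrow> nat) \<Rightarrow> 'a" where
  "Rf t E chk [] p u = E u"
| "Rf t E chk (r # rs) p u = (if chk p u then Rf t E chk rs (Suc p) u +
     (if u (fst r) < u (snd r) then stepw t u r * Rf t E chk rs (Suc p) (u \<circ> tr r) else 0) else 0)"

fun admr :: "(nat \<times> nat) list \<Rightarrow> (nat \<Rightarrow> nat) \<Rightarrow> nat list \<Rightarrow> bool" where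
  "admr rs u [] = True"
| "admr rs u (k # ks) = (u (fst (rs ! k)) < u (snd (rs ! k)) \<and> admr rs (u \<circ> tr (rs ! k)) ks)"

fun Wr :: "'a::comm_ring_1 \<Rightarrow> (nat \<times> nat) list \<Rightarrow> (nat \<Rightarrow> nat) \<Rightarrow> nat list \<Rightarrow> 'a" where
  "Wr t rs u [] = 1"
| "Wr t rs u (k # ks) = stepw t u (rs ! k) * Wr t rs (u \<circ> tr (rs ! k)) ks"

fun chkall :: "(nat \<Rightarrow> (nat \<Rightarrow> nat) \<Rightarrow> bool) \<Rightarrow> (nat \<times> nat) list \<Rightarrow> nat \<Rightarrow> (nat \<Rightarrow> nat) \<Rightarrow> nat list \<Rightarrow> bool" where
  "chkall chk rs p u [] = (\<forall>q. p \<le> q \<and> q \<le> length rs \<longrightarrow> chk q u)"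
| "chkall chk rs p u (k # ks) = ((\<forall>q. p \<le> q \<and> q \<le> k \<longrightarrow> chk q u) \<and> chkall chk rs (Suc k) (u \<circ> tr (rs ! k)) ks)"

lemma all_shift:
  assumes "p \<le> L"
  shows "(\<forall>q. p \<le> q \<and> q \<le> L \<longrightarrow> P q) \<longleftrightarrow> (P p \<and> (\<forall>q. Suc p \<le> q \<and> q \<le> L \<longrightarrow> P q))"
proof safe
  fix q assume "P p" "\<forall>q. Suc p \<le> q \<and> q \<le> L \<longrightarrow> P q" "p \<le> q" "q \<le> L"
  then show "P q" by (cases "q = p") auto
qed (use assms in auto)

lemma chkall_shift:
  assumes "\<forall>x\<in>set ks. p < x" "p \<le> length rs"
  shows "chkall chk rs p u ks = (chk p u \<and> chkall chk rs (Suc p) u ks)"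
proof (cases ks)
  case Nil
  then show ?thesis using all_shift[OF assms(2), of "\<lambda>q. chk q u"] by simp
next
  case (Cons k ks')
  then have pk: "p \<le> k" using assms by auto
  then show ?thesis using Cons all_shift[OF pk, of "\<lambda>q. chk q u"] by simp
qed

lemma sorted_insert_min:
  assumes "finite T" "\<forall>x\<in>T. p < x"
  shows "sorted_list_of_set (insert p T) = p # sorted_list_of_set T"
proof -
  have "Min (insert p T) = p" using assms by (auto intro!: Min_eqI)
  moreover have "insert p T - {p} = T" using assms by auto
  ultimately show ?thesis using sorted_list_of_set_nonempty[of "insert p T"] assms by simp
qed

lemma generic_sum:
  assumes "p \<le> length rs"
  shows "(\<Sum>T\<in>Pow {p..<length rs}. (if admr rs u (sorted_list_of_set T) \<and> chkall chk rs p u (sorted_list_of_set T)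
            then Wr t rs u (sorted_list_of_set T) else 0))
     = Rf t (\<lambda>v. if chk (length rs) v then 1 else 0) chk (drop p rs) p u"
  using assms
proof (induction "length rs - p" arbitrary: p u)
  case 0
  then have p: "p = length rs" by simp
  have e: "{p..<length rs} = {}" using p by simp
  have q: "(\<forall>q. p \<le> q \<and> q \<le> length rs \<longrightarrow> chk q u) = chk (length rs) u"
    using p by (metis order_refl le_antisym)
  show ?case unfolding p
    by (simp only: atLeastLessThan_empty order_refl Pow_empty) (auto dest: le_antisym)
next
  case (Suc x)
  define A where "A = {Suc p..<length rs}"
  have pl: "p < length rs" using Suc by simp
  have IV: "{p..<length rs} = insert p A" using pl by (auto simp: A_def)
  have pA: "p \<notin> A" by (simp add: A_def)
  have fA: "finite A" by (simp add: A_def)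
  have drop: "drop p rs = rs ! p # drop (Suc p) rs" using pl by (simp add: Cons_nth_drop_Suc)
  define E where "E = (\<lambda>v. if chk (length rs) v then 1 else (0::'a))"
  define F where "F = (\<lambda>u T. if admr rs u (sorted_list_of_set T) \<and> chkall chk rs p u (sorted_list_of_set T)
            then Wr t rs u (sorted_list_of_set T) else 0)"
  define G where "G = (\<lambda>u T. if admr rs u (sorted_list_of_set T) \<and> chkall chk rs (Suc p) u (sorted_list_of_set T)
            then Wr t rs u (sorted_list_of_set T) else 0)"
  have IH: "\<And>v. sum (G v) (Pow A) = Rf t E chk (drop (Suc p) rs) (Suc p) v"
    unfolding G_def A_def E_def using Suc by (intro Suc.hyps) auto
  have fT: "\<And>T. T \<in> Pow A \<Longrightarrow> finite T" using fA by (auto dest: finite_subset)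
  have sl: "\<And>T. T \<in> Pow A \<Longrightarrow> \<forall>x\<in>set (sorted_list_of_set T). p < x"
    using fT by (auto simp: A_def)
  have slI: "\<And>T. T \<in> Pow A \<Longrightarrow> sorted_list_of_set (insert p T) = p # sorted_list_of_set T"
    using fA by (intro sorted_insert_min) (auto simp: A_def dest: finite_subset)
  have F1: "F u T = (if chk p u then G u T else 0)" if "T \<in> Pow A" for T
    using chkall_shift[OF sl[OF that] pl[THEN less_imp_le]] unfolding F_def G_def by auto
  have F2: "F u (insert p T) = (if chk p u \<and> u (fst (rs ! p)) < u (snd (rs ! p)) then stepw t u (rs ! p) * G (u \<circ> tr (rs ! p)) T else 0)"
    if "T \<in> Pow A" for T
    using slI[OF that] unfolding F_def G_def by auto
  have "sum (F u) (Pow {p..<length rs}) = sum (F u) (Pow A) + sum (F u) (insert p ` Pow A)"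
    unfolding IV Pow_insert using fA pA by (intro sum.union_disjoint) auto
  also have "sum (F u) (insert p ` Pow A) = sum (\<lambda>T. F u (insert p T)) (Pow A)"
    using pA by (subst sum.reindex) (auto simp: inj_on_def)
  also have "\<dots> = sum (\<lambda>T. if chk p u \<and> u (fst (rs ! p)) < u (snd (rs ! p)) then stepw t u (rs ! p) * G (u \<circ> tr (rs ! p)) T else 0) (Pow A)"
    by (rule sum.cong[OF refl]) (rule F2)
  also have "\<dots> = (if chk p u \<and> u (fst (rs ! p)) < u (snd (rs ! p)) then stepw t u (rs ! p) * sum (G (u \<circ> tr (rs ! p))) (Pow A) else 0)"
    by (cases "chk p u \<and> u (fst (rs ! p)) < u (snd (rs ! p))") (simp_all add: sum_distrib_left del: de_Morgan_conj not_less)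
  also have "sum (F u) (Pow A) = sum (\<lambda>T. if chk p u then G u T else 0) (Pow A)"
    by (rule sum.cong[OF refl]) (rule F1)
  also have "\<dots> = (if chk p u then sum (G u) (Pow A) else 0)"
    by simp
  finally have "sum (F u) (Pow {p..<length rs}) = Rf t E chk (drop p rs) p u"
    unfolding drop by (simp add: IH)
  then show ?case by (simp add: F_def E_def)
qed

definition valid :: "nat \<Rightarrow> (nat \<times> nat) list \<Rightarrow> bool" where
  "valid n rs = (\<forall>r\<in>set rs. 1 \<le> fst r \<and> fst r < snd r \<and> snd r \<le> n)"

lemma tp_Nil[simp]: "trans_prod w rs [] = w"
  by (simp add: trans_prod_def)

lemma tp_Cons[simp]: "trans_prod w rs (k # ks) = trans_prod (w \<circ> tr (rs ! k)) rs ks"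
  by (simp add: trans_prod_def)

lemma tp_perm:
  assumes "u permutes {1..n}" "valid n rs" "set ks \<subseteq> {..<length rs}"
  shows "trans_prod u rs ks permutes {1..n}"
  using assms
proof (induction ks arbitrary: u)
  case Nil then show ?case by simp
next
  case (Cons k ks)
  have "rs ! k \<in> set rs" using Cons.prems by auto
  then have r: "1 \<le> fst (rs ! k)" "fst (rs ! k) \<le> n" "1 \<le> snd (rs ! k)" "snd (rs ! k) \<le> n"
    using Cons.prems(2) unfolding valid_def by fastforce+
  have "u \<circ> tr (rs ! k) permutes {1..n}" using perm_swap[OF Cons.prems(1) r] .
  then show ?case using Cons by simp
qed

lemma valid_nth:
  assumes "valid n rs" "k < length rs"
  shows "1 \<le> fst (rs ! k)" "fst (rs ! k) < snd (rs ! k)" "snd (rs ! k) \<le> n"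
  using assms nth_mem[OF assms(2)] unfolding valid_def by blast+

lemma adm_iff:
  assumes "u permutes {1..n}" "valid n rs" "set ks \<subseteq> {..<length rs}"
  shows "(\<forall>p<length ks. bruhat_less n (trans_prod u rs (take p ks)) (trans_prod u rs (take (Suc p) ks)))
         \<longleftrightarrow> admr rs u ks"
  using assms
proof (induction ks arbitrary: u)
  case Nil then show ?case by simp
next
  case (Cons k ks)
  have kl: "k < length rs" using Cons.prems by auto
  note r = valid_nth[OF Cons.prems(2) kl]
  have u2: "u \<circ> tr (rs ! k) permutes {1..n}"
    using perm_swap[OF Cons.prems(1)] r by auto
  have IH: "(\<forall>p<length ks. bruhat_less n (trans_prod (u \<circ> tr (rs ! k)) rs (take p ks))
              (trans_prod (u \<circ> tr (rs ! k)) rs (take (Suc p) ks))) \<longleftrightarrow> admr rs (u \<circ> tr (rs ! k)) ks"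
  proof -
    have "set ks \<subseteq> {..<length rs}" using Cons.prems(3) by simp
    from Cons.IH[OF u2 Cons.prems(2) this] show ?thesis .
  qed
  have b0: "bruhat_less n u (u \<circ> tr (rs ! k)) \<longleftrightarrow> u (fst (rs ! k)) < u (snd (rs ! k))"
    using bruhat_swap_iff[OF Cons.prems(1) r] .
  have "(\<forall>p<length (k # ks). bruhat_less n (trans_prod u rs (take p (k # ks))) (trans_prod u rs (take (Suc p) (k # ks))))
      \<longleftrightarrow> bruhat_less n u (u \<circ> tr (rs ! k)) \<and>
          (\<forall>p<length ks. bruhat_less n (trans_prod (u \<circ> tr (rs ! k)) rs (take p ks))
              (trans_prod (u \<circ> tr (rs ! k)) rs (take (Suc p) ks)))"
    by (auto simp: less_Suc_eq_0_disj)
  then show ?case using IH b0 by simp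
qed

lemma weight_ex:
  fixes t :: "'a::comm_ring_1"
  assumes "u permutes {1..n}" "valid n rs" "set ks \<subseteq> {..<length rs}" "admr rs u ks"
  shows "\<exists>e. perm_len n (trans_prod u rs ks) = perm_len n u + length ks + 2 * e \<and>
             Wr t rs u ks = (1 - t) ^ length ks * t ^ e"
  using assms
proof (induction ks arbitrary: u)
  case Nil then show ?case by simp
next
  case (Cons k ks)
  have kl: "k < length rs" using Cons.prems by auto
  note r = valid_nth[OF Cons.prems(2) kl]
  have u2: "u \<circ> tr (rs ! k) permutes {1..n}"
    using perm_swap[OF Cons.prems(1)] r by auto
  have lt: "u (fst (rs ! k)) < u (snd (rs ! k))" using Cons.prems(4) by simp
  define c where "c = card {c. fst (rs ! k) < c \<and> c < snd (rs ! k) \<and> u (fst (rs ! k)) < u c \<and> u c < u (snd (rs ! k))}"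
  have pl: "perm_len n (u \<circ> tr (rs ! k)) = perm_len n u + 2 * c + 1"
    unfolding c_def by (rule perm_len_swap[OF permutes_inj_on[OF Cons.prems(1)] r lt])
  obtain e where e: "perm_len n (trans_prod (u \<circ> tr (rs ! k)) rs ks) = perm_len n (u \<circ> tr (rs ! k)) + length ks + 2 * e"
     "Wr t rs (u \<circ> tr (rs ! k)) ks = (1 - t) ^ length ks * t ^ e"
  proof -
    have "set ks \<subseteq> {..<length rs}" using Cons.prems(3) by simp
    moreover have "admr rs (u \<circ> tr (rs ! k)) ks" using Cons.prems(4) by simp
    ultimately show ?thesis using Cons.IH[OF u2 Cons.prems(2)] that by blast
  qed
  have sw: "stepw t u (rs ! k) = (1 - t) * t ^ c" unfolding stepw_def c_def by simp
  show ?case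
    apply (rule exI[of _ "c + e"])
    using e pl by (simp add: sw power_add mult_ac)
qed

lemma weight_eq:
  fixes t :: "'a::comm_ring_1"
  assumes "u permutes {1..n}" "valid n rs" "set ks \<subseteq> {..<length rs}" "admr rs u ks"
  shows "(-1) ^ perm_len n (trans_prod u rs ks) * t ^ ((perm_len n u + perm_len n (trans_prod u rs ks) - length ks) div 2)
          * (t - 1) ^ length ks = (- t) ^ perm_len n u * Wr t rs u ks"
proof -
  obtain e where e: "perm_len n (trans_prod u rs ks) = perm_len n u + length ks + 2 * e"
             "Wr t rs u ks = (1 - t) ^ length ks * t ^ e"
    using weight_ex[OF assms, of t] by blast
  define l where "l = perm_len n u"
  define L where "L = length ks"
  have d: "(perm_len n u + perm_len n (trans_prod u rs ks) - length ks) div 2 = l + e"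
    using e(1) unfolding l_def by simp
  have "(-1::'a) ^ (l + L + 2 * e) * t ^ (l + e) * (t - 1) ^ L = (- t) ^ l * ((1 - t) ^ L * t ^ e)"
  proof -
    have "(-1::'a) ^ (l + L + 2 * e) * t ^ (l + e) * (t - 1) ^ L
        = ((-1) ^ l * t ^ l) * (((-1) ^ L * (t - 1) ^ L) * t ^ e)"
    proof -
      have m: "(-1::'a) ^ (2 * e) = 1" by (simp add: power_mult)
      show ?thesis by (simp add: power_add m mult_ac)
    qed
    also have "(-1::'a) ^ L * (t - 1) ^ L = (1 - t) ^ L"
      by (simp only: power_mult_distrib[symmetric]) simp
    also have "(-1::'a) ^ l * t ^ l = (- t) ^ l"
      by (rule power_minus[symmetric])
    finally show ?thesis .
  qed
  then show ?thesis using e d unfolding l_def L_def by simp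
qed

lemma chkall_filter:
  assumes "sorted_wrt (<) ks" "\<forall>x\<in>set ks. p \<le> x \<and> x < length rs"
  shows "chkall chk rs p u ks = (\<forall>q. p \<le> q \<and> q \<le> length rs \<longrightarrow> chk q (trans_prod u rs (filter (\<lambda>k. k < q) ks)))"
  using assms
proof (induction ks arbitrary: p u)
  case Nil then show ?case by simp
next
  case (Cons k ks)
  have IH: "chkall chk rs (Suc k) (u \<circ> tr (rs ! k)) ks = (\<forall>q. Suc k \<le> q \<and> q \<le> length rs \<longrightarrow>
      chk q (trans_prod (u \<circ> tr (rs ! k)) rs (filter (\<lambda>k. k < q) ks)))"
    using Cons by (intro Cons.IH) auto
  have f1: "filter (\<lambda>x. x < q) (k # ks) = []" if "q \<le> k" for q
    using Cons.prems that by (auto simp: filter_empty_conv)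
  have f2: "filter (\<lambda>x. x < q) (k # ks) = k # filter (\<lambda>x. x < q) ks" if "k < q" for q
    using that by simp
  have pk: "p \<le> k" "k < length rs" using Cons.prems by auto
  show ?case
    unfolding chkall.simps IH
  proof safe
    fix q assume A: "\<forall>q. p \<le> q \<and> q \<le> k \<longrightarrow> chk q u"
      "\<forall>q. Suc k \<le> q \<and> q \<le> length rs \<longrightarrow> chk q (trans_prod (u \<circ> tr (rs ! k)) rs (filter (\<lambda>k. k < q) ks))"
      "p \<le> q" "q \<le> length rs"
    show "chk q (trans_prod u rs (filter (\<lambda>k. k < q) (k # ks)))"
    proof (cases "q \<le> k")
      case True then show ?thesis using A f1 by simp
    next
      case False then show ?thesis using A f2[of q] by simp
    qed
  next
    fix q assume A: "\<forall>q. p \<le> q \<and> q \<le> length rs \<longrightarrow> chk q (trans_prod u rs (filter (\<lambda>k. k < q) (k # ks)))"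
    {
      assume "p \<le> q" "q \<le> k"
      then show "chk q u" using A f1[of q] pk by force
    }
    {
      assume q: "Suc k \<le> q" "q \<le> length rs"
      have pq: "p \<le> q" using q pk by simp
      have "chk q (trans_prod u rs (filter (\<lambda>k. k < q) (k # ks)))" using A pq q(2) by blast
      moreover have "filter (\<lambda>x. x < q) (k # ks) = k # filter (\<lambda>x. x < q) ks" using q by simp
      ultimately show "chk q (trans_prod (u \<circ> tr (rs ! k)) rs (filter (\<lambda>k. k < q) ks))"
        by simp
    }
  qed
qed

lemma Rf0_append: "Rf0 t E (xs @ ys) u = Rf0 t (Rf0 t E ys) xs u"
  by (induction xs arbitrary: u) auto

lemma frozen:
  assumes "\<forall>r\<in>set xs. fst r \<noteq> c \<and> snd r \<noteq> c" "\<forall>w. w c \<noteq> \<alpha> \<longrightarrow> E w = 0" "v c \<noteq> \<alpha>"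
  shows "Rf0 t E xs v = 0"
  using assms
proof (induction xs arbitrary: v)
  case Nil then show ?case by simp
next
  case (Cons r xs)
  have "(v \<circ> tr r) c = v c" using Cons.prems(1) by simp
  then show ?case using Cons by simp
qed

definition rowl :: "nat \<Rightarrow> nat \<Rightarrow> nat \<Rightarrow> (nat \<times> nat) list" where
  "rowl n i l = map (\<lambda>l'. (i, l')) [l..<Suc n]"

lemma rowl_Cons: "l \<le> n \<Longrightarrow> rowl n i l = (i, l) # rowl n i (Suc l)"
  unfolding rowl_def by (simp add: upt_conv_Cons)

lemma rowl_Nil: "rowl n i (Suc n) = []"
  unfolding rowl_def by simp

lemma card_Suc_split:
  "card {c. i < c \<and> c < Suc l \<and> P c} = card {c. i < c \<and> c < l \<and> P c} + (if i < l \<and> P l then 1 else 0)"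
proof -
  have fin: "finite {c. i < c \<and> c < l \<and> P c}" by (rule finite_subset[of _ "{..<l}"]) auto
  show ?thesis
  proof (cases "i < l \<and> P l")
    case True
    then have "{c. i < c \<and> c < Suc l \<and> P c} = insert l {c. i < c \<and> c < l \<and> P c}" by (auto simp: less_Suc_eq)
    then show ?thesis using True fin by simp
  next
    case False
    then have "{c. i < c \<and> c < Suc l \<and> P c} = {c. i < c \<and> c < l \<and> P c}" by (auto simp: less_Suc_eq)
    then show ?thesis using False by simp
  qed
qed

lemma card_split_mid:
  fixes u :: "nat \<Rightarrow> nat"
  assumes "x < y" "y < V" "\<forall>c. i < c \<and> c < l \<longrightarrow> u c \<noteq> y"
  shows "card {c. i < c \<and> c < l \<and> x < u c \<and> u c < V} =
         card {c. i < c \<and> c < l \<and> x < u c \<and> u c < y} + card {c. i < c \<and> c < l \<and> y < u c \<and> u c < V}"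
proof -
  have "{c. i < c \<and> c < l \<and> x < u c \<and> u c < V} =
         {c. i < c \<and> c < l \<and> x < u c \<and> u c < y} \<union> {c. i < c \<and> c < l \<and> y < u c \<and> u c < V}"
  proof (rule set_eqI)
    fix c show "c \<in> {c. i < c \<and> c < l \<and> x < u c \<and> u c < V} \<longleftrightarrow> c \<in> {c. i < c \<and> c < l \<and> x < u c \<and> u c < y} \<union> {c. i < c \<and> c < l \<and> y < u c \<and> u c < V}"
      using assms(1,2) assms(3)[rule_format, of c] by auto
  qed
  moreover have "finite {c. i < c \<and> c < l \<and> x < u c \<and> u c < y}" by (rule finite_subset[of _ "{..<l}"]) auto
  moreover have "finite {c. i < c \<and> c < l \<and> y < u c \<and> u c < V}" by (rule finite_subset[of _ "{..<l}"]) auto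
  moreover have "{c. i < c \<and> c < l \<and> x < u c \<and> u c < y} \<inter> {c. i < c \<and> c < l \<and> y < u c \<and> u c < V} = {}"
    by auto
  ultimately show ?thesis by (simp add: card_Un_disjoint)
qed

definition rowval :: "'a::comm_ring_1 \<Rightarrow> 'a \<Rightarrow> nat \<Rightarrow> nat \<Rightarrow> nat \<Rightarrow> nat \<Rightarrow> (nat \<Rightarrow> nat) \<Rightarrow> 'a" where
  "rowval t C V i n l u = (if u i = V then C else if V < u i then 0
     else if (\<exists>L. l \<le> L \<and> L \<le> n \<and> u L = V)
          then C * ((1 - t) * t ^ card {c. i < c \<and> c < l \<and> u i < u c \<and> u c < V}) else 0)"

lemma row_gen:
  fixes t :: "'a::comm_ring_1"
  assumes iK: "1 \<le> i" "i \<le> K"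
    and Ecnd: "\<forall>w. w permutes {1..n} \<longrightarrow> (\<forall>c. 1 \<le> c \<and> c \<le> K \<and> c \<noteq> i \<longrightarrow> w c = u0 c) \<longrightarrow> E w = (if w i = V then C else 0)"
    and l: "K < l" "l \<le> Suc n"
    and u: "u permutes {1..n}" "\<forall>c. 1 \<le> c \<and> c \<le> K \<and> c \<noteq> i \<longrightarrow> u c = u0 c"
  shows "Rf0 t E (rowl n i l) u = rowval t C V i n l u"
  using l u
proof (induction "Suc n - l" arbitrary: l u)
  case 0
  then have l: "l = Suc n" by simp
  have "E u = (if u i = V then C else 0)" using Ecnd 0 by auto
  then show ?case using l by (auto simp: rowl_Nil rowval_def)
next
  case (Suc d)
  have ln: "l \<le> n" using Suc by simp
  have il: "i < l" using Suc iK by simp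
  define u' where "u' = u \<circ> transpose i l"
  have u'perm: "u' permutes {1..n}" unfolding u'_def using perm_swap[OF Suc.prems(3), of i l] iK ln il by simp
  have u'i: "u' i = u l" and u'l: "u' l = u i" by (simp_all add: u'_def)
  have u'c: "u' c = u c" if "c \<noteq> i" "c \<noteq> l" for c using that by (simp add: u'_def)
  have u'agree: "\<forall>c. 1 \<le> c \<and> c \<le> K \<and> c \<noteq> i \<longrightarrow> u' c = u0 c"
    using Suc.prems(1,4) u'c by auto
  have IH1: "Rf0 t E (rowl n i (Suc l)) u = rowval t C V i n (Suc l) u"
    using Suc by (intro Suc.hyps) auto
  have IH2: "Rf0 t E (rowl n i (Suc l)) u' = rowval t C V i n (Suc l) u'"
    using Suc u'perm u'agree by (intro Suc.hyps) auto
  have inj: "inj_on u {1..n}" using Suc.prems(3) by (rule permutes_inj_on)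
  have uil: "u i \<noteq> u l" using inj iK il ln Suc.prems(1) by (auto dest: inj_onD)
  have rec: "Rf0 t E (rowl n i l) u = Rf0 t E (rowl n i (Suc l)) u +
      (if u i < u l then stepw t u (i, l) * Rf0 t E (rowl n i (Suc l)) u' else 0)"
    by (simp add: rowl_Cons[OF ln] u'_def)
  have sw: "stepw t u (i, l) = (1 - t) * t ^ card {c. i < c \<and> c < l \<and> u i < u c \<and> u c < u l}"
    by (simp add: stepw_def)
  show ?case
  proof (cases "u i = V")
    case True
    then have "rowval t C V i n (Suc l) u = C" by (simp add: rowval_def)
    moreover have "u i < u l \<Longrightarrow> rowval t C V i n (Suc l) u' = 0" using True u'i uil by (simp add: rowval_def)
    ultimately show ?thesis using rec IH1 IH2 True by (simp add: rowval_def)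
  next
    case ne: False
    show ?thesis
    proof (cases "V < u i")
      case True
      then have "rowval t C V i n (Suc l) u = 0" using ne by (simp add: rowval_def)
      moreover have "u i < u l \<Longrightarrow> rowval t C V i n (Suc l) u' = 0" using True u'i by (simp add: rowval_def)
      ultimately show ?thesis using rec IH1 IH2 True ne by (simp add: rowval_def)
    next
      case False
      then have xV: "u i < V" using ne by simp
      show ?thesis
      proof (cases "u l = V")
        case True
        have noL: "\<not> (\<exists>L. Suc l \<le> L \<and> L \<le> n \<and> u L = V)"
        proof
          assume "\<exists>L. Suc l \<le> L \<and> L \<le> n \<and> u L = V"
          then obtain L where L: "Suc l \<le> L" "L \<le> n" "u L = V" by blast
          then have "u L = u l" using True by simp
          then have "L = l" using inj L ln Suc.prems(1) iK by (auto dest: inj_onD)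
          then show False using L by simp
        qed
        then have r1: "rowval t C V i n (Suc l) u = 0" using xV noL unfolding rowval_def by auto
        have r2: "rowval t C V i n (Suc l) u' = C" using True u'i by (simp add: rowval_def)
        have r3: "rowval t C V i n l u = C * ((1 - t) * t ^ card {c. i < c \<and> c < l \<and> u i < u c \<and> u c < V})"
          using xV True ln by (auto simp: rowval_def)
        show ?thesis using rec IH1 IH2 r1 r2 r3 xV True sw by (simp add: mult_ac)
      next
        case ulV: False
        show ?thesis
        proof (cases "\<exists>L. l \<le> L \<and> L \<le> n \<and> u L = V")
          case True
          then obtain L where L: "l \<le> L" "L \<le> n" "u L = V" by blast
          then have L2: "Suc l \<le> L" using ulV by (cases "L = l") auto
          have ex1: "\<exists>L. Suc l \<le> L \<and> L \<le> n \<and> u L = V" using L L2 by blast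
          define h where "h = card {c. i < c \<and> c < l \<and> u i < u c \<and> u c < V}"
          have r3: "rowval t C V i n l u = C * ((1 - t) * t ^ h)"
            using xV ne True by (simp add: rowval_def h_def)
          have r1: "rowval t C V i n (Suc l) u = C * ((1 - t) * t ^ (h + (if u i < u l \<and> u l < V then 1 else 0)))"
            using xV ne ex1 il by (simp add: rowval_def h_def card_Suc_split)
          show ?thesis
          proof (cases "u i < u l")
            case False
            then show ?thesis using rec IH1 r1 r3 by simp
          next
            case True
            show ?thesis
            proof (cases "u l < V")
              case False
              then have "V < u l" using ulV by simp
              then have "rowval t C V i n (Suc l) u' = 0" using u'i by (simp add: rowval_def)
              then show ?thesis using rec IH1 IH2 r1 r3 True False by simp
            next
              case ylt: True
              define m where "m = card {c. i < c \<and> c < l \<and> u i < u c \<and> u c < u l}"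
              define h2 where "h2 = card {c. i < c \<and> c < l \<and> u l < u c \<and> u c < V}"
              have noy: "\<forall>c. i < c \<and> c < l \<longrightarrow> u c \<noteq> u l"
              proof (intro allI impI)
                fix c assume c: "i < c \<and> c < l"
                show "u c \<noteq> u l"
                proof
                  assume "u c = u l"
                  then have "c = l" using inj c iK ln by (auto dest: inj_onD)
                  then show False using c by simp
                qed
              qed
              have hs: "h = m + h2" unfolding h_def m_def h2_def
                by (rule card_split_mid[OF True ylt noy])
              have Lu': "u' L = V" using u'c[of L] L L2 il by simp
              have set2: "{c. i < c \<and> c < Suc l \<and> u' i < u' c \<and> u' c < V} = {c. i < c \<and> c < l \<and> u l < u c \<and> u c < V}"
              proof (rule set_eqI)
                fix c show "c \<in> {c. i < c \<and> c < Suc l \<and> u' i < u' c \<and> u' c < V} \<longleftrightarrow> c \<in> {c. i < c \<and> c < l \<and> u l < u c \<and> u c < V}"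
                  using u'i u'l u'c[of c] True by (cases "c = l") (auto simp: less_Suc_eq)
              qed
              have r2: "rowval t C V i n (Suc l) u' = C * ((1 - t) * t ^ h2)"
                using u'i ylt Lu' L L2 set2 unfolding rowval_def h2_def by auto
              have "Rf0 t E (rowl n i l) u = C * ((1 - t) * t ^ (h + 1)) + (1 - t) * t ^ m * (C * ((1 - t) * t ^ h2))"
                using rec IH1 IH2 r1 r2 True ylt sw unfolding m_def by simp
              also have "\<dots> = C * ((1 - t) * t ^ h)"
                unfolding hs by (simp add: power_add algebra_simps)
              finally show ?thesis using r3 by simp
            qed
          qed
        next
          case False
          then have noL: "\<not> (\<exists>L. Suc l \<le> L \<and> L \<le> n \<and> u L = V)" by auto
          have r1: "rowval t C V i n (Suc l) u = 0" using xV noL unfolding rowval_def by auto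
          have r3: "rowval t C V i n l u = 0" using xV False unfolding rowval_def by auto
          have r2: "rowval t C V i n (Suc l) u' = 0"
          proof -
            have "\<not> (\<exists>L. Suc l \<le> L \<and> L \<le> n \<and> u' L = V)"
              using noL u'c il by auto
            then show ?thesis using u'i ulV unfolding rowval_def by auto
          qed
          show ?thesis using rec IH1 IH2 r1 r2 r3 by simp
        qed
      qed
    qed
  qed
qed

definition rows :: "nat \<Rightarrow> nat \<Rightarrow> nat \<Rightarrow> nat \<Rightarrow> (nat \<times> nat) list" where
  "rows n K i k = concat (map (\<lambda>i'. rowl n i' (Suc K)) [i..<Suc k])"

definition phi :: "'a::comm_ring_1 \<Rightarrow> (nat \<Rightarrow> nat) \<Rightarrow> (nat \<Rightarrow> nat) \<Rightarrow> nat \<Rightarrow> nat \<Rightarrow> 'a" where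
  "phi t a b K i = (if a i = b i then 1 else (1 - t) * t ^ card {c. i < c \<and> c < Suc K \<and> a i < a c \<and> a c < b i})"

lemma rows_Cons: "i \<le> k \<Longrightarrow> rows n K i k = rowl n i (Suc K) @ rows n K (Suc i) k"
  unfolding rows_def by (subst upt_conv_Cons) auto

lemma rows_touch: "r \<in> set (rows n K i k) \<Longrightarrow> i \<le> fst r \<and> K < snd r"
  unfolding rows_def rowl_def by auto

lemma perm_hits:
  assumes "v permutes {1..n}" "1 \<le> y" "y \<le> n"
  shows "\<exists>p. 1 \<le> p \<and> p \<le> n \<and> v p = y"
proof -
  have "y \<in> v ` {1..n}" using permutes_image[OF assms(1)] assms(2,3) by simp
  then show ?thesis by auto
qed

lemma block_gen:
  fixes t :: "'a::comm_ring_1"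
  assumes kK: "k \<le> K" and Kn: "K \<le> n"
    and ab: "\<forall>i. 1 \<le> i \<and> i \<le> k \<longrightarrow> a i \<le> b i \<and> 1 \<le> b i \<and> b i \<le> n"
    and binj: "\<forall>i c. 1 \<le> i \<and> i \<le> k \<and> 1 \<le> c \<and> c \<le> k \<and> i \<noteq> c \<longrightarrow> b i \<noteq> b c"
    and att: "\<forall>i c. 1 \<le> i \<and> i \<le> k \<and> i < c \<and> c \<le> K \<longrightarrow> b i \<noteq> a c"
    and Eend: "\<forall>w. E w = (if (\<forall>c. 1 \<le> c \<and> c \<le> k \<longrightarrow> w c = b c) then C else 0)"
    and i: "1 \<le> i" "i \<le> Suc k"
  shows "\<forall>v. v permutes {1..n} \<longrightarrow> (\<forall>c. 1 \<le> c \<and> c \<le> K \<longrightarrow> v c = (if c < i then b c else a c)) \<longrightarrow>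
           Rf0 t E (rows n K i k) v = C * (\<Prod>i'\<in>{i..k}. phi t a b K i')"
  using i
proof (induction "Suc k - i" arbitrary: i)
  case 0
  then have ik: "i = Suc k" by simp
  show ?case
  proof (intro allI impI)
    fix v assume v: "v permutes {1..n}" "\<forall>c. 1 \<le> c \<and> c \<le> K \<longrightarrow> v c = (if c < i then b c else a c)"
    have "rows n K i k = []" using ik by (simp add: rows_def)
    moreover have "\<forall>c. 1 \<le> c \<and> c \<le> k \<longrightarrow> v c = b c" using v(2) ik kK by auto
    ultimately show "Rf0 t E (rows n K i k) v = C * (\<Prod>i'\<in>{i..k}. phi t a b K i')"
      using Eend ik by simp
  qed
next
  case (Suc d)
  have ik: "i \<le> k" using Suc by simp
  define C' where "C' = C * (\<Prod>i'\<in>{Suc i..k}. phi t a b K i')"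
  have IH: "\<forall>v. v permutes {1..n} \<longrightarrow> (\<forall>c. 1 \<le> c \<and> c \<le> K \<longrightarrow> v c = (if c < Suc i then b c else a c)) \<longrightarrow>
           Rf0 t E (rows n K (Suc i) k) v = C'"
    unfolding C'_def using Suc by (intro Suc.hyps) auto
  show ?case
  proof (intro allI impI)
    fix v assume v: "v permutes {1..n}" "\<forall>c. 1 \<le> c \<and> c \<le> K \<longrightarrow> v c = (if c < i then b c else a c)"
    define E' where "E' = Rf0 t E (rows n K (Suc i) k)"
    have Ecnd: "\<forall>w. w permutes {1..n} \<longrightarrow> (\<forall>c. 1 \<le> c \<and> c \<le> K \<and> c \<noteq> i \<longrightarrow> w c = v c) \<longrightarrow>
                 E' w = (if w i = b i then C' else 0)"
    proof (intro allI impI)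
      fix w assume w: "w permutes {1..n}" "\<forall>c. 1 \<le> c \<and> c \<le> K \<and> c \<noteq> i \<longrightarrow> w c = v c"
      show "E' w = (if w i = b i then C' else 0)"
      proof (cases "w i = b i")
        case True
        have "\<forall>c. 1 \<le> c \<and> c \<le> K \<longrightarrow> w c = (if c < Suc i then b c else a c)"
          using w(2) v(2) True by (auto simp: less_Suc_eq)
        then show ?thesis using IH w(1) True unfolding E'_def by simp
      next
        case False
        have "Rf0 t E (rows n K (Suc i) k) w = 0"
        proof (rule frozen[where c = i and \<alpha> = "b i"])
          show "\<forall>r\<in>set (rows n K (Suc i) k). fst r \<noteq> i \<and> snd r \<noteq> i"
            using rows_touch[of _ n K "Suc i" k] Suc.prems ik kK by fastforce
          show "\<forall>w. w i \<noteq> b i \<longrightarrow> E w = 0" using Eend Suc.prems ik by auto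
          show "w i \<noteq> b i" by fact
        qed
        then show ?thesis using False unfolding E'_def by simp
      qed
    qed
    have "Rf0 t E (rows n K i k) v = Rf0 t E' (rowl n i (Suc K)) v"
      unfolding E'_def by (simp add: rows_Cons[OF ik] Rf0_append)
    also have "\<dots> = rowval t C' (b i) i n (Suc K) v"
      by (rule row_gen[where K = K and u0 = v]) (use Suc.prems ik kK Kn Ecnd v in auto)
    also have "\<dots> = C' * phi t a b K i"
    proof -
      have vi: "v i = a i" using v(2) Suc.prems ik kK by auto
      show ?thesis
      proof (cases "a i = b i")
        case True then show ?thesis using vi by (simp add: rowval_def phi_def)
      next
        case False
        have abi: "a i < b i" using ab Suc.prems ik False by force
        obtain p where p: "1 \<le> p" "p \<le> n" "v p = b i"
          using perm_hits[OF v(1)] ab Suc.prems ik by force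
        have pK: "Suc K \<le> p"
        proof (rule ccontr)
          assume "\<not> Suc K \<le> p"
          then have pK: "p \<le> K" by simp
          have vp: "v p = (if p < i then b p else a p)" using v(2) p pK by auto
          show False
          proof (cases "p < i")
            case True then show ?thesis using vp p binj Suc.prems ik by force
          next
            case nl: False
            show ?thesis
            proof (cases "p = i")
              case True then show ?thesis using vp p False by simp
            next
              case False
              then have "i < p" using nl by simp
              then show ?thesis using vp p att Suc.prems ik pK nl by force
            qed
          qed
        qed
        have cs: "{c. i < c \<and> c < Suc K \<and> v i < v c \<and> v c < b i} = {c. i < c \<and> c < Suc K \<and> a i < a c \<and> a c < b i}"
          using v(2) vi Suc.prems by auto
        show ?thesis using False abi vi p pK cs unfolding rowval_def phi_def by auto
      qed
    qed
    also have "\<dots> = C * (\<Prod>i'\<in>{i..k}. phi t a b K i')"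
      unfolding C'_def using prod.atLeast_Suc_atMost[OF ik, of "phi t a b K"] by (simp add: mult_ac)
    finally show "Rf0 t E (rows n K i k) v = C * (\<Prod>i'\<in>{i..k}. phi t a b K i')" .
  qed
qed

definition chkF :: "nat \<Rightarrow> (nat \<Rightarrow> nat) \<Rightarrow> (nat \<Rightarrow> nat \<Rightarrow> nat) \<Rightarrow> nat \<Rightarrow> (nat \<Rightarrow> nat) \<Rightarrow> bool" where
  "chkF n mu \<sigma> q v = (\<forall>j. 1 \<le> j \<and> j \<le> mu 1 \<and> block_end n mu j = q \<longrightarrow> (\<forall>i. in_shape n mu i j \<longrightarrow> v i = \<sigma> i j))"

lemma fiber_sum:
  fixes t :: "'a::comm_ring_1"
  assumes val: "valid n (alcove_chain n mu)"
    and be: "\<forall>j. 1 \<le> j \<and> j \<le> mu 1 \<longrightarrow> block_end n mu j \<le> length (alcove_chain n mu)"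
    and sh: "\<forall>i j. in_shape n mu i j \<longrightarrow> 1 \<le> j \<and> j \<le> mu 1"
  shows "(\<Sum>(w,T) \<in> fiber n mu \<sigma>.
            (-1) ^ perm_len n (wT n mu w T)
          * t ^ ((perm_len n w + perm_len n (wT n mu w T) - card T) div 2)
          * (t - 1) ^ card T)
       = (\<Sum>w\<in>{w. w permutes {1..n}}. (- t) ^ perm_len n w *
            Rf t (\<lambda>v. if chkF n mu \<sigma> (length (alcove_chain n mu)) v then 1 else 0) (chkF n mu \<sigma>) (alcove_chain n mu) 0 w)"
proof -
  define rs where "rs = alcove_chain n mu"
  define m where "m = length rs"
  define chk where "chk = chkF n mu \<sigma>"
  define f where "f = (\<lambda>(w,T). (-1) ^ perm_len n (wT n mu w T)
          * t ^ ((perm_len n w + perm_len n (wT n mu w T) - card T) div 2)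
          * (t - 1) ^ card T)"
  define P where "P = {w. w permutes {1..n}}"
  have finP: "finite P" unfolding P_def by (rule finite_permutations) simp
  have sub: "fiber n mu \<sigma> \<subseteq> P \<times> Pow {..<m}"
    unfolding fiber_def admissible_def P_def m_def rs_def by auto
  have key: "(if (w,T) \<in> fiber n mu \<sigma> then f (w,T) else 0) =
             (-t) ^ perm_len n w * (if admr rs w (sorted_list_of_set T) \<and> chkall chk rs 0 w (sorted_list_of_set T)
                 then Wr t rs w (sorted_list_of_set T) else 0)"
    if w: "w \<in> P" and T: "T \<in> Pow {..<m}" for w T
  proof -
    define ks where "ks = sorted_list_of_set T"
    have finT: "finite T" using T by (auto dest: finite_subset)
    have setks: "set ks = T" unfolding ks_def using finT by simp
    have sks: "sorted_wrt (<) ks" unfolding ks_def by (rule strict_sorted_list_of_set)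
    have lks: "length ks = card T" unfolding ks_def using finT by simp
    have wp: "w permutes {1..n}" using w by (simp add: P_def)
    have ksm: "set ks \<subseteq> {..<length rs}" using setks T by (simp add: m_def)
    have adm: "(w,T) \<in> admissible n mu \<longleftrightarrow> admr rs w ks"
      using adm_iff[OF wp val[folded rs_def] ksm] wp T unfolding admissible_def ks_def rs_def m_def
      by (simp add: Let_def)
    have fib: "(\<forall>i j. in_shape n mu i j \<longrightarrow> pi_j n mu w T j i = \<sigma> i j) \<longleftrightarrow> chkall chk rs 0 w ks"
    proof -
      have "chkall chk rs 0 w ks = (\<forall>q. 0 \<le> q \<and> q \<le> length rs \<longrightarrow> chk q (trans_prod w rs (filter (\<lambda>k. k < q) ks)))"
        by (rule chkall_filter) (use sks ksm in auto)
      also have "\<dots> \<longleftrightarrow> (\<forall>i j. in_shape n mu i j \<longrightarrow> pi_j n mu w T j i = \<sigma> i j)"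
      proof
        assume A: "\<forall>q. 0 \<le> q \<and> q \<le> length rs \<longrightarrow> chk q (trans_prod w rs (filter (\<lambda>k. k < q) ks))"
        show "\<forall>i j. in_shape n mu i j \<longrightarrow> pi_j n mu w T j i = \<sigma> i j"
        proof (intro allI impI)
          fix i j assume ij: "in_shape n mu i j"
          then have j: "1 \<le> j" "j \<le> mu 1" using sh by auto
          then have "block_end n mu j \<le> length rs" using be rs_def by auto
          then have "chk (block_end n mu j) (trans_prod w rs (filter (\<lambda>k. k < block_end n mu j) ks))" using A by auto
          then show "pi_j n mu w T j i = \<sigma> i j"
            using j ij unfolding chk_def chkF_def pi_j_def ks_def rs_def by blast
        qed
      next
        assume B: "\<forall>i j. in_shape n mu i j \<longrightarrow> pi_j n mu w T j i = \<sigma> i j"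
        show "\<forall>q. 0 \<le> q \<and> q \<le> length rs \<longrightarrow> chk q (trans_prod w rs (filter (\<lambda>k. k < q) ks))"
          using B unfolding chk_def chkF_def pi_j_def ks_def rs_def by auto
      qed
      finally show ?thesis by simp
    qed
    have fT: "f (w,T) = (-t) ^ perm_len n w * Wr t rs w ks" if "admr rs w ks"
    proof -
      have "f (w,T) = (-1) ^ perm_len n (trans_prod w rs ks) * t ^ ((perm_len n w + perm_len n (trans_prod w rs ks) - length ks) div 2)
          * (t - 1) ^ length ks"
        unfolding f_def wT_def ks_def rs_def using lks ks_def by simp
      also have "\<dots> = (-t) ^ perm_len n w * Wr t rs w ks"
        by (rule weight_eq[OF wp val[folded rs_def] ksm that])
      finally show ?thesis .
    qed
    have "(w,T) \<in> fiber n mu \<sigma> \<longleftrightarrow> admr rs w ks \<and> chkall chk rs 0 w ks"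
      using adm fib unfolding fiber_def by auto
    then show ?thesis using fT unfolding ks_def by auto
  qed
  have "(\<Sum>x\<in>fiber n mu \<sigma>. f x) = (\<Sum>x\<in>P \<times> Pow {..<m}. if x \<in> fiber n mu \<sigma> then f x else 0)"
    using sub finP by (simp add: sum.inter_restrict[symmetric] Int_absorb1)
  also have "\<dots> = (\<Sum>w\<in>P. \<Sum>T\<in>Pow {..<m}. if (w,T) \<in> fiber n mu \<sigma> then f (w,T) else 0)"
    by (simp add: sum.cartesian_product)
  also have "\<dots> = (\<Sum>w\<in>P. (-t) ^ perm_len n w * (\<Sum>T\<in>Pow {..<m}. if admr rs w (sorted_list_of_set T) \<and> chkall chk rs 0 w (sorted_list_of_set T)
                 then Wr t rs w (sorted_list_of_set T) else 0))"
    apply (rule sum.cong[OF refl])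
    apply (subst sum_distrib_left)
    apply (rule sum.cong[OF refl])
    apply (rule key)
     apply assumption+
    done
  also have "\<dots> = (\<Sum>w\<in>P. (-t) ^ perm_len n w * Rf t (\<lambda>v. if chk (length rs) v then 1 else 0) chk rs 0 w)"
  proof (rule sum.cong[OF refl])
    fix w assume "w \<in> P"
    have "{..<m} = {0..<length rs}" by (auto simp: m_def)
    then show "(-t) ^ perm_len n w * (\<Sum>T\<in>Pow {..<m}. if admr rs w (sorted_list_of_set T) \<and> chkall chk rs 0 w (sorted_list_of_set T)
                 then Wr t rs w (sorted_list_of_set T) else 0) = (-t) ^ perm_len n w * Rf t (\<lambda>v. if chk (length rs) v then 1 else 0) chk rs 0 w"
      using generic_sum[of 0 rs w chk t] by simp
  qed
  finally show ?thesis unfolding f_def P_def rs_def chk_def by simp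
qed

lemma Rf_append: "Rf t E chk (xs @ ys) p u = Rf t (Rf t E chk ys (p + length xs)) chk xs p u"
  by (induction xs arbitrary: p u) auto

lemma Rf_inner:
  assumes "\<forall>q v. p \<le> q \<and> q < p + length xs \<longrightarrow> chk q v"
  shows "Rf t E chk xs p u = Rf0 t E xs u"
  using assms
proof (induction xs arbitrary: p u)
  case Nil then show ?case by simp
next
  case (Cons r xs)
  have h: "\<forall>q v. Suc p \<le> q \<and> q < Suc p + length xs \<longrightarrow> chk q v" using Cons.prems by auto
  have c: "chk p u" using Cons.prems by auto
  have e1: "Rf t E chk xs (Suc p) u = Rf0 t E xs u" by (rule Cons.IH[OF h])
  have e2: "Rf t E chk xs (Suc p) (u \<circ> tr r) = Rf0 t E xs (u \<circ> tr r)" by (rule Cons.IH[OF h])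
  show ?case by (simp only: Rf.simps Rf0.simps e1 e2 c if_True)
qed

lemma Rf_block:
  assumes "xs \<noteq> []" "\<forall>q v. p < q \<and> q < p + length xs \<longrightarrow> chk q v"
  shows "Rf t E chk xs p u = (if chk p u then Rf0 t E xs u else 0)"
proof -
  obtain r ys where xs: "xs = r # ys" using assms(1) by (cases xs) auto
  have h: "\<forall>q v. Suc p \<le> q \<and> q < Suc p + length ys \<longrightarrow> chk q v" using assms(2) xs by auto
  have e1: "Rf t E chk ys (Suc p) u = Rf0 t E ys u" by (rule Rf_inner[OF h])
  have e2: "Rf t E chk ys (Suc p) (u \<circ> tr r) = Rf0 t E ys (u \<circ> tr r)" by (rule Rf_inner[OF h])
  show ?thesis unfolding xs by (simp only: Rf.simps Rf0.simps e1 e2)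
qed

lemma Rf0_cong:
  assumes "valid n xs" "u permutes {1..n}" "\<forall>v. v permutes {1..n} \<longrightarrow> E v = E' v"
  shows "Rf0 t E xs u = Rf0 t E' xs u"
  using assms
proof (induction xs arbitrary: u)
  case Nil then show ?case by simp
next
  case (Cons r xs)
  have r: "1 \<le> fst r" "fst r \<le> n" "1 \<le> snd r" "snd r \<le> n" using Cons.prems(1) unfolding valid_def by auto
  have v: "valid n xs" using Cons.prems(1) unfolding valid_def by auto
  have p2: "u \<circ> tr r permutes {1..n}" using perm_swap[OF Cons.prems(2) r] .
  have e1: "Rf0 t E xs u = Rf0 t E' xs u" by (rule Cons.IH[OF v Cons.prems(2) Cons.prems(3)])
  have e2: "Rf0 t E xs (u \<circ> tr r) = Rf0 t E' xs (u \<circ> tr r)" by (rule Cons.IH[OF v p2 Cons.prems(3)])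
  show ?case by (simp only: Rf0.simps e1 e2)
qed

locale tctx =
  fixes n :: nat and lam :: "nat \<Rightarrow> nat" and \<sigma> :: "nat \<Rightarrow> nat \<Rightarrow> nat"
  assumes n2: "2 \<le> n"
    and lam_mono: "\<forall>i. 1 \<le> i \<and> i < n \<longrightarrow> lam (Suc i) \<le> lam i"
    and lamn: "lam n = 0"
    and sF: "\<sigma> \<in> fillings_F n (lam_rho n lam)"
begin

abbreviation "mu \<equiv> lam_rho n lam"
abbreviation "cp j \<equiv> conj_part n mu j"
abbreviation "M \<equiv> mu 1"
abbreviation "cb j \<equiv> chain_block n mu j"
abbreviation "be j \<equiv> block_end n mu j"

lemma lam_anti:
  assumes "1 \<le> i" "i \<le> i'" "i' \<le> n"
  shows "lam i' \<le> lam i"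
  using assms(2,3)
proof (induction i' rule: dec_induct)
  case base then show ?case by simp
next
  case (step m)
  then have "lam (Suc m) \<le> lam m" using lam_mono assms(1) by auto
  then show ?case using step by simp
qed

lemma mu_strict: "1 \<le> i \<Longrightarrow> i < i' \<Longrightarrow> i' \<le> n \<Longrightarrow> mu i' < mu i"
  using lam_anti[of i i'] by (simp add: lam_rho_def)

lemma mu_le: "1 \<le> i \<Longrightarrow> i \<le> i' \<Longrightarrow> i' \<le> n \<Longrightarrow> mu i' \<le> mu i"
  using mu_strict[of i i'] by (cases "i = i'") auto

lemma mu_n: "mu n = 0" using lamn by (simp add: lam_rho_def)

lemma M_pos: "1 \<le> M" using n2 by (simp add: lam_rho_def)

lemma S_eq: "1 \<le> j \<Longrightarrow> {i\<in>{1..n}. j \<le> mu i} = {1..cp j}"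
proof -
  assume j: "1 \<le> j"
  define S where "S = {i\<in>{1..n}. j \<le> mu i}"
  have cpS: "cp j = card S" by (simp add: conj_part_def S_def)
  have finS: "finite S" by (simp add: S_def)
  show ?thesis
  proof (cases "S = {}")
    case True then show ?thesis using cpS by (simp add: S_def)
  next
    case False
    define m where "m = Max S"
    have mS: "m \<in> S" using False finS by (simp add: m_def)
    have "S = {1..m}"
    proof
      show "S \<subseteq> {1..m}" using finS by (auto simp: m_def S_def)
      show "{1..m} \<subseteq> S"
      proof
        fix i assume i: "i \<in> {1..m}"
        have "mu m \<le> mu i" using i mS by (intro mu_le) (auto simp: S_def)
        then show "i \<in> S" using i mS by (auto simp: S_def)
      qed
    qed
    then show ?thesis using cpS by (simp add: S_def)
  qed
qed

lemma in_shape_iff: "in_shape n mu i j \<longleftrightarrow> 1 \<le> j \<and> 1 \<le> i \<and> i \<le> cp j"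
proof (cases "1 \<le> j")
  case True
  have "in_shape n mu i j \<longleftrightarrow> 1 \<le> j \<and> i \<in> {i\<in>{1..n}. j \<le> mu i}" by (auto simp: in_shape_def)
  moreover have "i \<in> {i\<in>{1..n}. j \<le> mu i} \<longleftrightarrow> i \<in> {1..cp j}"
    by (subst S_eq[OF True]) (rule refl)
  ultimately show ?thesis using True by simp
next
  case False then show ?thesis by (simp add: in_shape_def)
qed

lemma S_sub: "1 \<le> j \<Longrightarrow> {i\<in>{1..n}. j \<le> mu i} \<subseteq> {1..n-1}"
proof
  fix i assume j: "1 \<le> j" and i: "i \<in> {i\<in>{1..n}. j \<le> mu i}"
  have "i \<noteq> n" using j i mu_n by auto
  then show "i \<in> {1..n-1}" using i by auto
qed

lemma cp_le: "1 \<le> j \<Longrightarrow> cp j \<le> n - 1"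
  using card_mono[OF _ S_sub] by (simp add: conj_part_def)

lemma cp_anti: "1 \<le> j \<Longrightarrow> j \<le> j' \<Longrightarrow> cp j' \<le> cp j"
  unfolding conj_part_def by (rule card_mono) auto

lemma cp_step: "1 \<le> j \<Longrightarrow> cp j \<le> Suc (cp (Suc j))"
proof (rule ccontr)
  assume j: "1 \<le> j" and c: "\<not> cp j \<le> Suc (cp (Suc j))"
  define a where "a = Suc (cp (Suc j))"
  have a1: "a \<in> {1..cp j}" "Suc a \<in> {1..cp j}" using c by (auto simp: a_def)
  have a2: "a \<notin> {1..cp (Suc j)}" "Suc a \<notin> {1..cp (Suc j)}" by (auto simp: a_def)
  have "a \<in> {i\<in>{1..n}. j \<le> mu i}" "Suc a \<in> {i\<in>{1..n}. j \<le> mu i}" using a1 S_eq[OF j] by auto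
  moreover have "a \<notin> {i\<in>{1..n}. Suc j \<le> mu i}" "Suc a \<notin> {i\<in>{1..n}. Suc j \<le> mu i}"
    using a2 S_eq[of "Suc j"] by auto
  ultimately have "mu a = j" "mu (Suc a) = j" "1 \<le> a" "Suc a \<le> n" by auto
  then show False using mu_strict[of a "Suc a"] by simp
qed

lemma cp1: "cp 1 = n - 1"
proof -
  have "{i\<in>{1..n}. 1 \<le> mu i} = {1..n-1}"
  proof
    show "{i\<in>{1..n}. 1 \<le> mu i} \<subseteq> {1..n-1}" by (rule S_sub) simp
    show "{1..n-1} \<subseteq> {i\<in>{1..n}. 1 \<le> mu i}"
    proof
      fix i assume i: "i \<in> {1..n-1}"
      then have "1 \<le> n - i" by auto
      then have "1 \<le> mu i" by (simp add: lam_rho_def)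
      then show "i \<in> {i\<in>{1..n}. 1 \<le> mu i}" using i by auto
    qed
  qed
  then show ?thesis by (simp add: conj_part_def)
qed

lemma cp_pos: "1 \<le> j \<Longrightarrow> j \<le> M \<Longrightarrow> 1 \<le> cp j"
proof -
  assume j: "1 \<le> j" "j \<le> M"
  have "(1::nat) \<in> {1..n}" using n2 by simp
  then have "1 \<in> {i\<in>{1..n}. j \<le> mu i}" using j(2) by blast
  then have "1 \<in> {1..cp j}" using S_eq[OF j(1)] by blast
  then show ?thesis by simp
qed

lemma cpM: "cp M = 1"
proof -
  have "{i\<in>{1..n}. M \<le> mu i} = {1}"
  proof
    show "{i\<in>{1..n}. M \<le> mu i} \<subseteq> {1}"
    proof
      fix i assume i: "i \<in> {i\<in>{1..n}. M \<le> mu i}"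
      show "i \<in> {1}"
      proof (rule ccontr)
        assume "i \<notin> {1}"
        then have "1 < i" using i by auto
        then have "mu i < M" using mu_strict[of 1 i] i by auto
        then show False using i by auto
      qed
    qed
    show "{1} \<subseteq> {i\<in>{1..n}. M \<le> mu i}" using n2 by simp
  qed
  then show ?thesis by (simp add: conj_part_def)
qed

end

lemma valid_concat: "valid n (concat xs) \<longleftrightarrow> (\<forall>x\<in>set xs. valid n x)"
  unfolding valid_def by auto

lemma rows_valid: "k \<le> K \<Longrightarrow> K \<le> n \<Longrightarrow> valid n (rows n K 1 k)"
  unfolding valid_def rows_def rowl_def by auto

lemma rows_nonempty: "1 \<le> k \<Longrightarrow> K < n \<Longrightarrow> rows n K 1 k \<noteq> []"
  unfolding rows_def rowl_def by auto

context tctx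
begin

lemma cb1: "cb 1 = []"
proof -
  have "(LEAST i. 1 \<le> i \<and> cp i = cp 1) = 1"
    by (rule Least_equality) auto
  then have "cb 1 = gbar' n (cp 1)" by (simp add: chain_block_def)
  also have "\<dots> = []" using n2 cp1 by (simp add: gbar'_def)
  finally show ?thesis .
qed

lemma cbj: "2 \<le> j \<Longrightarrow> cb j = rows n (cp (j - 1)) 1 (cp j)"
proof -
  assume j: "2 \<le> j"
  have a: "cp j \<le> cp (j - 1)" using j by (intro cp_anti) auto
  have b: "cp (j - 1) \<le> Suc (cp j)" using cp_step[of "j - 1"] j by simp
  show ?thesis
  proof (cases "cp (j - 1) = cp j")
    case True
    have "(LEAST i. 1 \<le> i \<and> cp i = cp j) \<le> j - 1"
      by (rule Least_le) (use True j in auto)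
    then have "j \<noteq> (LEAST i. 1 \<le> i \<and> cp i = cp j)" using j by auto
    then have "cb j = gbar n (cp j)" by (simp add: chain_block_def)
    then show ?thesis using True by (simp add: gbar_def rows_def rowl_def)
  next
    case False
    then have K: "cp (j - 1) = Suc (cp j)" using a b by simp
    have "(LEAST i. 1 \<le> i \<and> cp i = cp j) = j"
    proof (rule Least_equality)
      show "1 \<le> j \<and> cp j = cp j" using j by simp
      fix y assume y: "1 \<le> y \<and> cp y = cp j"
      show "j \<le> y"
      proof (rule ccontr)
        assume "\<not> j \<le> y"
        then have "cp (j - 1) \<le> cp y" using y by (intro cp_anti) auto
        then show False using y K by simp
      qed
    qed
    then have "cb j = gbar' n (cp j)" by (simp add: chain_block_def)
    then show ?thesis using K by (simp add: gbar'_def rows_def rowl_def)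
  qed
qed

lemma cb_valid: "valid n (cb j)"
proof (cases "2 \<le> j")
  case True
  have "cp j \<le> cp (j - 1)" using True by (intro cp_anti) auto
  moreover have "cp (j - 1) \<le> n - 1" using True by (intro cp_le) simp
  then have "cp (j - 1) \<le> n" by simp
  ultimately show ?thesis using cbj[OF True] rows_valid by simp
next
  case False
  then have "j = 0 \<or> j = 1" by auto
  then show ?thesis
  proof
    assume "j = 1" then show ?thesis using cb1 by (simp add: valid_def)
  next
    assume j0: "j = 0"
    have "cb 0 = gbar n (cp 0) \<or> cb 0 = gbar' n (cp 0)" by (simp add: chain_block_def)
    moreover have "cp 0 \<le> n" unfolding conj_part_def by (rule order_trans[OF card_mono[of "{1..n}"]]) auto
    ultimately show ?thesis using j0 unfolding valid_def gbar_def gbar'_def by auto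
  qed
qed

lemma alc_valid: "valid n (alcove_chain n mu)"
  unfolding alcove_chain_def valid_concat using cb_valid by auto

lemma cb_nonempty: "2 \<le> j \<Longrightarrow> j \<le> M \<Longrightarrow> cb j \<noteq> []"
proof -
  assume j: "2 \<le> j" "j \<le> M"
  have "1 \<le> cp j" using j by (intro cp_pos) auto
  moreover have "cp (j - 1) \<le> n - 1" using j by (intro cp_le) simp
  then have "cp (j - 1) < n" using n2 by simp
  ultimately show ?thesis using cbj[OF j(1)] rows_nonempty by simp
qed

lemma be_Suc: "be (Suc j) = be j + length (cb (Suc j))"
  unfolding block_end_def by simp

lemma be1: "be 1 = 0"
  unfolding block_end_def using cb1 by simp

lemma be_less: "1 \<le> j \<Longrightarrow> j < j' \<Longrightarrow> j' \<le> M \<Longrightarrow> be j < be j'"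
proof (induction j' rule: less_induct)
  case (less j')
  obtain j'' where j'': "j' = Suc j''" using less.prems by (cases j') auto
  have "cb j' \<noteq> []" using less.prems by (intro cb_nonempty) auto
  then have lt: "be j'' < be j'" using be_Suc[of j''] j'' by simp
  show ?case
  proof (cases "j = j''")
    case True then show ?thesis using lt by simp
  next
    case False
    then have "be j < be j''" using less.prems j'' by (intro less.IH) auto
    then show ?thesis using lt by simp
  qed
qed

lemma be_le: "1 \<le> j \<Longrightarrow> j \<le> j' \<Longrightarrow> j' \<le> M \<Longrightarrow> be j \<le> be j'"
  using be_less[of j j'] by (cases "j = j'") auto

lemma alc_len: "length (alcove_chain n mu) = be M"
  unfolding alcove_chain_def block_end_def by simp

definition colok :: "nat \<Rightarrow> (nat \<Rightarrow> nat) \<Rightarrow> bool" where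
  "colok j v = (\<forall>i. 1 \<le> i \<and> i \<le> cp j \<longrightarrow> v i = \<sigma> i j)"

lemma chk_be: "1 \<le> j \<Longrightarrow> j \<le> M \<Longrightarrow> chkF n mu \<sigma> (be j) v \<longleftrightarrow> colok j v"
proof -
  assume j: "1 \<le> j" "j \<le> M"
  have "(1 \<le> j' \<and> j' \<le> M \<and> be j' = be j) \<longleftrightarrow> j' = j" for j'
  proof
    assume a: "1 \<le> j' \<and> j' \<le> M \<and> be j' = be j"
    show "j' = j"
    proof (rule ccontr)
      assume "j' \<noteq> j"
      then have "j' < j \<or> j < j'" by auto
      then show False using be_less[of j' j] be_less[of j j'] a j by auto
    qed
  qed (use j in auto)
  then show ?thesis unfolding chkF_def colok_def in_shape_iff using j by auto
qed

lemma chk_inner: "2 \<le> j \<Longrightarrow> j \<le> M \<Longrightarrow> be (j - 1) < q \<Longrightarrow> q < be j \<Longrightarrow> chkF n mu \<sigma> q v"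
proof -
  assume j: "2 \<le> j" "j \<le> M" and q: "be (j - 1) < q" "q < be j"
  have "\<not> (1 \<le> j' \<and> j' \<le> M \<and> be j' = q)" for j'
  proof
    assume a: "1 \<le> j' \<and> j' \<le> M \<and> be j' = q"
    show False
    proof (cases "j' \<le> j - 1")
      case True
      then have "be j' \<le> be (j - 1)" using a j by (intro be_le) auto
      then show False using a q by simp
    next
      case False
      then have "j \<le> j'" by simp
      then have "be j \<le> be j'" using a j by (intro be_le) auto
      then show False using a q by simp
    qed
  qed
  then show ?thesis unfolding chkF_def by auto
qed

end

context tctx
begin

lemma F_range: "in_shape n mu i j \<Longrightarrow> 1 \<le> \<sigma> i j \<and> \<sigma> i j \<le> n"
  using sF unfolding fillings_F_def by auto

lemma F_col: "in_shape n mu i j \<Longrightarrow> in_shape n mu k j \<Longrightarrow> i \<noteq> k \<Longrightarrow> \<sigma> i j \<noteq> \<sigma> k j"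
  using sF unfolding fillings_F_def by blast

lemma F_att: "in_shape n mu i j \<Longrightarrow> in_shape n mu k (Suc j) \<Longrightarrow> k < i \<Longrightarrow> \<sigma> i j \<noteq> \<sigma> k (Suc j)"
  using sF unfolding fillings_F_def by blast

lemma F_row: "in_shape n mu i j \<Longrightarrow> in_shape n mu i (Suc j) \<Longrightarrow> \<sigma> i j \<le> \<sigma> i (Suc j)"
  using sF unfolding fillings_F_def by blast

definition Sfx :: "nat \<Rightarrow> (nat \<times> nat) list" where
  "Sfx j = concat (map (\<lambda>j. cb j) [j..<Suc M])"

definition Phi :: "'a::comm_ring_1 \<Rightarrow> nat \<Rightarrow> 'a" where
  "Phi t j = (\<Prod>i\<in>{1..cp j}. phi t (\<lambda>i. \<sigma> i (j - 1)) (\<lambda>i. \<sigma> i j) (cp (j - 1)) i)"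

lemma suffix:
  fixes t :: "'a::comm_ring_1"
  assumes "2 \<le> j" "j \<le> Suc M"
  shows "\<forall>u. u permutes {1..n} \<longrightarrow>
    Rf t (\<lambda>v. if chkF n mu \<sigma> (length (alcove_chain n mu)) v then 1 else 0) (chkF n mu \<sigma>) (Sfx j) (be (j - 1)) u
      = (if colok (j - 1) u then (\<Prod>j'\<in>{j..M}. Phi t j') else 0)"
  using assms
proof (induction "Suc M - j" arbitrary: j)
  case 0
  then have j: "j = Suc M" by simp
  show ?case
  proof (intro allI impI)
    fix u assume "u permutes {1..n}"
    have "Sfx j = []" using j by (simp add: Sfx_def)
    moreover have "chkF n mu \<sigma> (length (alcove_chain n mu)) u \<longleftrightarrow> colok M u"
      unfolding alc_len using M_pos by (intro chk_be) auto
    ultimately show "Rf t (\<lambda>v. if chkF n mu \<sigma> (length (alcove_chain n mu)) v then 1 else 0) (chkF n mu \<sigma>) (Sfx j) (be (j - 1)) u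
      = (if colok (j - 1) u then (\<Prod>j'\<in>{j..M}. Phi t j') else 0)"
      using j by simp
  qed
next
  case (Suc d)
  have jM: "j \<le> M" using Suc by simp
  have j2: "2 \<le> j" using Suc by simp
  define E0 where "E0 = (\<lambda>v. if chkF n mu \<sigma> (length (alcove_chain n mu)) v then 1 else (0::'a))"
  define C where "C = (\<Prod>j'\<in>{Suc j..M}. Phi t j')"
  define E1 where "E1 = Rf t E0 (chkF n mu \<sigma>) (Sfx (Suc j)) (be j)"
  have IH: "\<forall>v. v permutes {1..n} \<longrightarrow> E1 v = (if colok j v then C else 0)"
    using Suc.hyps(1)[of "Suc j"] Suc.hyps(2) Suc.prems unfolding E1_def E0_def C_def by simp
  define K where "K = cp (j - 1)"
  define k where "k = cp j"
  have Sj: "Sfx j = cb j @ Sfx (Suc j)" using jM unfolding Sfx_def by (subst upt_conv_Cons) auto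
  have bej: "be (j - 1) + length (cb j) = be j" using be_Suc[of "j - 1"] j2 by simp
  have step1: "Rf t E0 (chkF n mu \<sigma>) (Sfx j) (be (j - 1)) u = Rf t E1 (chkF n mu \<sigma>) (cb j) (be (j - 1)) u" for u
    unfolding Sj Rf_append bej E1_def ..
  have step2: "Rf t E1 (chkF n mu \<sigma>) (cb j) (be (j - 1)) u = (if chkF n mu \<sigma> (be (j - 1)) u then Rf0 t E1 (cb j) u else 0)" for u
  proof (rule Rf_block)
    show "cb j \<noteq> []" using j2 jM by (rule cb_nonempty)
    show "\<forall>q v. be (j - 1) < q \<and> q < be (j - 1) + length (cb j) \<longrightarrow> chkF n mu \<sigma> q v"
      using chk_inner[OF j2 jM] bej by auto
  qed
  have chk0: "chkF n mu \<sigma> (be (j - 1)) u \<longleftrightarrow> colok (j - 1) u" for u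
    using j2 jM by (intro chk_be) auto
  define E2 where "E2 = (\<lambda>w. if (\<forall>c. 1 \<le> c \<and> c \<le> k \<longrightarrow> w c = \<sigma> c j) then C else (0::'a))"
  have E12: "\<forall>v. v permutes {1..n} \<longrightarrow> E1 v = E2 v"
    using IH unfolding E2_def colok_def k_def by simp
  have kK: "k \<le> K" unfolding k_def K_def using j2 by (intro cp_anti) auto
  have Kn: "K \<le> n" unfolding K_def conj_part_def by (rule order_trans[OF card_mono[of "{1..n}"]]) auto
  have jj: "Suc (j - 1) = j" using j2 by simp
  have j1: "1 \<le> j - 1" using j2 by simp
  have shK: "in_shape n mu i (j - 1) \<longleftrightarrow> 1 \<le> i \<and> i \<le> K" for i
    unfolding in_shape_iff K_def using j1 by simp
  have shk: "in_shape n mu i j \<longleftrightarrow> 1 \<le> i \<and> i \<le> k" for i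
    unfolding in_shape_iff k_def using j2 by simp
  have blk: "\<forall>v. v permutes {1..n} \<longrightarrow> (\<forall>c. 1 \<le> c \<and> c \<le> K \<longrightarrow> v c = (if c < 1 then \<sigma> c j else \<sigma> c (j - 1))) \<longrightarrow>
           Rf0 t E2 (rows n K 1 k) v = C * (\<Prod>i'\<in>{1..k}. phi t (\<lambda>i. \<sigma> i (j - 1)) (\<lambda>i. \<sigma> i j) K i')"
  proof (rule block_gen[OF kK Kn])
    show "\<forall>i. 1 \<le> i \<and> i \<le> k \<longrightarrow> \<sigma> i (j - 1) \<le> \<sigma> i j \<and> 1 \<le> \<sigma> i j \<and> \<sigma> i j \<le> n"
    proof (intro allI impI)
      fix i assume i: "1 \<le> i \<and> i \<le> k"
      have "in_shape n mu i (j - 1)" using shK i kK by auto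
      moreover have "in_shape n mu i j" using shk i by auto
      ultimately show "\<sigma> i (j - 1) \<le> \<sigma> i j \<and> 1 \<le> \<sigma> i j \<and> \<sigma> i j \<le> n"
        using F_row[of i "j - 1"] F_range[of i j] jj by auto
    qed
    show "\<forall>i c. 1 \<le> i \<and> i \<le> k \<and> 1 \<le> c \<and> c \<le> k \<and> i \<noteq> c \<longrightarrow> \<sigma> i j \<noteq> \<sigma> c j"
      using F_col shk by blast
    show "\<forall>i c. 1 \<le> i \<and> i \<le> k \<and> i < c \<and> c \<le> K \<longrightarrow> \<sigma> i j \<noteq> \<sigma> c (j - 1)"
    proof (intro allI impI)
      fix i c assume ic: "1 \<le> i \<and> i \<le> k \<and> i < c \<and> c \<le> K"
      have "in_shape n mu c (j - 1)" using shK ic by auto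
      moreover have "in_shape n mu i (Suc (j - 1))" using shk ic jj by auto
      ultimately show "\<sigma> i j \<noteq> \<sigma> c (j - 1)" using F_att[of c "j - 1" i] ic jj by auto
    qed
    show "\<forall>w. E2 w = (if \<forall>c. 1 \<le> c \<and> c \<le> k \<longrightarrow> w c = \<sigma> c j then C else 0)"
      unfolding E2_def by simp
  qed simp_all
  show ?case
  proof (intro allI impI)
    fix u assume u: "u permutes {1..n}"
    show "Rf t (\<lambda>v. if chkF n mu \<sigma> (length (alcove_chain n mu)) v then 1 else 0) (chkF n mu \<sigma>) (Sfx j) (be (j - 1)) u
      = (if colok (j - 1) u then (\<Prod>j'\<in>{j..M}. Phi t j') else 0)"
    proof (cases "colok (j - 1) u")
      case False
      then show ?thesis using step1 step2 chk0 unfolding E0_def by simp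
    next
      case True
      have "Rf0 t E1 (cb j) u = Rf0 t E2 (cb j) u"
        by (rule Rf0_cong[OF cb_valid u E12])
      also have "\<dots> = Rf0 t E2 (rows n K 1 k) u" using cbj[OF j2] unfolding K_def k_def by simp
      also have "\<dots> = C * Phi t j"
      proof -
        have "\<forall>c. 1 \<le> c \<and> c \<le> K \<longrightarrow> u c = (if c < 1 then \<sigma> c j else \<sigma> c (j - 1))"
          using True unfolding colok_def K_def by auto
        then show ?thesis using blk u unfolding Phi_def K_def k_def by simp
      qed
      also have "\<dots> = (\<Prod>j'\<in>{j..M}. Phi t j')"
        unfolding C_def using prod.atLeast_Suc_atMost[OF jM, of "Phi t"] by (simp add: mult.commute)
      finally show ?thesis using step1 step2 chk0 True unfolding E0_def by simp
    qed
  qed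
qed

end

context tctx
begin

abbreviation "Img1 \<equiv> (\<lambda>i. \<sigma> i 1) ` {1..n-1}"

lemma sh1: "in_shape n mu i 1 \<longleftrightarrow> 1 \<le> i \<and> i \<le> n - 1"
  unfolding in_shape_iff cp1 by simp

lemma col1_inj: "inj_on (\<lambda>i. \<sigma> i 1) {1..n-1}"
proof (rule inj_onI)
  fix x y assume xy: "x \<in> {1..n-1}" "y \<in> {1..n-1}" "\<sigma> x 1 = \<sigma> y 1"
  show "x = y"
  proof (rule ccontr)
    assume "x \<noteq> y"
    moreover have "in_shape n mu x 1" "in_shape n mu y 1" using xy(1,2) sh1 by auto
    ultimately have "\<sigma> x 1 \<noteq> \<sigma> y 1" using F_col by blast
    then show False using xy(3) by simp
  qed
qed

lemma Img1_sub: "Img1 \<subseteq> {1..n}"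
  using F_range sh1 by auto

lemma Img1_card: "card Img1 = n - 1"
  using card_image[OF col1_inj] by simp

definition a0 :: nat where "a0 = missing_entry n mu \<sigma>"

lemma missing: "{1..n} - Img1 = {a0}"
proof -
  have "card ({1..n} - Img1) = 1"
    using Img1_card Img1_sub n2 by (simp add: card_Diff_subset finite_subset)
  then obtain a where a: "{1..n} - Img1 = {a}" by (rule card_1_singletonE)
  have "missing_entry n mu \<sigma> = a"
    unfolding missing_entry_def
  proof (rule the_equality)
    show "a \<in> {1..n} \<and> (\<forall>i. in_shape n mu i 1 \<longrightarrow> \<sigma> i 1 \<noteq> a)"
      using a sh1 by (auto simp: set_eq_iff) (metis Diff_iff atLeastAtMost_iff image_eqI insertI1)+
    fix b assume b: "b \<in> {1..n} \<and> (\<forall>i. in_shape n mu i 1 \<longrightarrow> \<sigma> i 1 \<noteq> b)"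
    have "b \<notin> Img1"
    proof
      assume "b \<in> Img1"
      then obtain i where i: "i \<in> {1..n-1}" "b = \<sigma> i 1" by auto
      then have "in_shape n mu i 1" using sh1 by auto
      then show False using b i by auto
    qed
    then have "b \<in> {1..n} - Img1" using b by auto
    then show "b = a" using a by blast
  qed
  then show ?thesis using a by (simp add: a0_def)
qed

lemma a0_range: "1 \<le> a0" "a0 \<le> n" "a0 \<notin> Img1"
  using missing by auto

definition w0 :: "nat \<Rightarrow> nat" where
  "w0 i = (if 1 \<le> i \<and> i \<le> n - 1 then \<sigma> i 1 else if i = n then a0 else i)"

lemma w0n: "w0 n = a0"
proof -
  have "\<not> (n \<le> n - 1)" using n2 by arith
  then show ?thesis by (simp add: w0_def)
qed

lemma w0_perm: "w0 permutes {1..n}"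
proof (rule bij_imp_permutes)
  have inj: "inj_on w0 {1..n}"
  proof (rule inj_onI)
    fix x y assume xy: "x \<in> {1..n}" "y \<in> {1..n}" "w0 x = w0 y"
    show "x = y"
    proof (cases "x = n"; cases "y = n")
      assume "x \<noteq> n" "y \<noteq> n"
      then have xy2: "x \<in> {1..n-1}" "y \<in> {1..n-1}" using xy by auto
      then have "\<sigma> x 1 = \<sigma> y 1" using xy(3) unfolding w0_def by auto
      then show "x = y" using xy2 col1_inj by (auto dest: inj_onD)
    next
      assume "x = n" "y \<noteq> n"
      then have yy: "y \<in> {1..n-1}" using xy by auto
      have "w0 n = a0" by (rule w0n)
      moreover have "w0 y = \<sigma> y 1" using yy by (simp add: w0_def)
      ultimately have "a0 = \<sigma> y 1" using xy(3) \<open>x = n\<close> by simp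
      note this yy
      then show "x = y" using a0_range(3) by auto
    next
      assume "x \<noteq> n" "y = n"
      then have yy: "x \<in> {1..n-1}" using xy by auto
      have "w0 n = a0" by (rule w0n)
      moreover have "w0 x = \<sigma> x 1" using yy by (simp add: w0_def)
      ultimately have "a0 = \<sigma> x 1" using xy(3) \<open>y = n\<close> by simp
      note this yy
      then show "x = y" using a0_range(3) by auto
    qed simp
  qed
  have "w0 ` {1..n} \<subseteq> {1..n}"
  proof
    fix y assume "y \<in> w0 ` {1..n}"
    then obtain x where x: "x \<in> {1..n}" "y = w0 x" by auto
    show "y \<in> {1..n}"
    proof (cases "x = n")
      case True then show ?thesis using x a0_range n2 unfolding w0_def by auto
    next
      case False
      then have xx: "x \<in> {1..n-1}" using x by auto
      then have "y = \<sigma> x 1" using x by (simp add: w0_def)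
      moreover have "\<sigma> x 1 \<in> Img1" using xx by blast
      ultimately show ?thesis using Img1_sub by blast
    qed
  qed
  then have "w0 ` {1..n} = {1..n}" using inj by (intro endo_inj_surj) auto
  then show "bij_betw w0 {1..n} {1..n}" using inj by (simp add: bij_betw_def)
  show "\<And>x. x \<notin> {1..n} \<Longrightarrow> w0 x = x" using n2 unfolding w0_def by auto
qed

lemma w0_colok: "colok 1 w0"
  unfolding colok_def w0_def cp1 by auto

lemma colok1_unique:
  assumes w: "w permutes {1..n}" "colok 1 w"
  shows "w = w0"
proof
  fix x
  show "w x = w0 x"
  proof (cases "x \<in> {1..n}")
    case False
    then have "x \<noteq> n" using n2 by auto
    then show ?thesis using False permutes_not_in[OF w(1)] unfolding w0_def by auto
  next
    case True
    show ?thesis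
    proof (cases "x = n")
      case False
      then show ?thesis using True w(2) unfolding colok_def cp1 w0_def by auto
    next
      case xn: True
      have inj: "inj_on w {1..n}" using w(1) by (rule permutes_inj_on)
      have wn: "w n \<in> {1..n}" using permutes_in_image[OF w(1)] True xn by simp
      have "w n \<notin> Img1"
      proof
        assume "w n \<in> Img1"
        then obtain i where i: "i \<in> {1..n-1}" "w n = \<sigma> i 1" by auto
        then have "w i = \<sigma> i 1" using w(2) unfolding colok_def cp1 by auto
        then have "w i = w n" using i by simp
        moreover have "i \<in> {1..n}" "n \<in> {1..n}" using i n2 by auto
        ultimately have "i = n" using inj by (auto dest: inj_onD)
        then show False using i n2 by simp
      qed
      then have "w n = a0" using wn missing by auto
      then show ?thesis using xn w0n by simp
    qed
  qed
qed

lemma sum_w0: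
  fixes X :: "'a::comm_ring_1"
  shows "(\<Sum>w\<in>{w. w permutes {1..n}}. (- t) ^ perm_len n w * (if colok 1 w then X else 0)) = (- t) ^ perm_len n w0 * X"
proof -
  have "(\<Sum>w\<in>{w. w permutes {1..n}}. (- t) ^ perm_len n w * (if colok 1 w then X else 0))
      = (\<Sum>w\<in>{w. w permutes {1..n}}. if w = w0 then (- t) ^ perm_len n w0 * X else 0)"
  proof (rule sum.cong[OF refl])
    fix w assume "w \<in> {w. w permutes {1..n}}"
    then have wp: "w permutes {1..n}" by simp
    show "(- t) ^ perm_len n w * (if colok 1 w then X else 0) = (if w = w0 then (- t) ^ perm_len n w0 * X else 0)"
    proof (cases "colok 1 w")
      case True
      then have "w = w0" using colok1_unique wp by blast
      then show ?thesis using True by simp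
    next
      case False
      then have "w \<noteq> w0" using w0_colok by blast
      then show ?thesis using False by simp
    qed
  qed
  also have "\<dots> = (- t) ^ perm_len n w0 * X"
    using w0_perm finite_permutations[of "{1..n}"] by (simp add: sum.delta)
  finally show ?thesis .
qed

end

lemma card_pairs_snd:
  assumes "finite J" "\<forall>j\<in>J. finite {i. P i j}" "\<forall>i j. P i j \<longrightarrow> j \<in> J"
  shows "card {(i,j). P i j} = (\<Sum>j\<in>J. card {i. P i j})"
proof -
  have "{(i,j). P i j} = (\<lambda>(j,i). (i,j)) ` (SIGMA j:J. {i. P i j})" using assms(3) by auto
  moreover have "inj_on (\<lambda>(j,i). (i,j)) (SIGMA j:J. {i. P i j})" by (auto simp: inj_on_def)
  ultimately have "card {(i,j). P i j} = card (SIGMA j:J. {i. P i j})" by (simp add: card_image)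
  also have "\<dots> = (\<Sum>j\<in>J. card {i. P i j})" using assms by (simp add: card_SigmaI)
  finally show ?thesis .
qed

lemma card_pairs_fst:
  assumes "finite A" "\<forall>a\<in>A. finite {b. P a b}" "\<forall>a b. P a b \<longrightarrow> a \<in> A"
  shows "card {(a,b). P a b} = (\<Sum>a\<in>A. card {b. P a b})"
proof -
  have "{(a,b). P a b} = (SIGMA a:A. {b. P a b})" using assms(3) by auto
  then show ?thesis using assms by (simp add: card_SigmaI)
qed

lemma card_triples:
  fixes P :: "'i \<Rightarrow> 'j \<Rightarrow> 'k \<Rightarrow> bool"
  assumes "finite KS" "\<forall>k\<in>KS. finite (I k)" "\<forall>k\<in>KS. \<forall>i\<in>I k. finite {j. P i j k}"
    "\<forall>i j k. P i j k \<longrightarrow> k \<in> KS \<and> i \<in> I k"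
  shows "card {(i,j,k). P i j k} = (\<Sum>k\<in>KS. \<Sum>i\<in>I k. card {j. P i j k})"
proof -
  have "{(i,j,k). P i j k} = (\<lambda>(k,i,j). (i,j,k)) ` (SIGMA k:KS. SIGMA i:I k. {j. P i j k})"
  proof (rule set_eqI)
    fix x :: "'i \<times> 'j \<times> 'k"
    obtain i j k where x: "x = (i,j,k)" by (cases x) auto
    show "x \<in> {(i,j,k). P i j k} \<longleftrightarrow> x \<in> (\<lambda>(k,i,j). (i,j,k)) ` (SIGMA k:KS. SIGMA i:I k. {j. P i j k})"
    proof
      assume "x \<in> {(i,j,k). P i j k}"
      then have "P i j k" using x by simp
      then have "(k,i,j) \<in> (SIGMA k:KS. SIGMA i:I k. {j. P i j k})" using assms(4) by auto
      then show "x \<in> (\<lambda>(k,i,j). (i,j,k)) ` (SIGMA k:KS. SIGMA i:I k. {j. P i j k})"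
        unfolding x by (rule rev_image_eqI) simp
    qed auto
  qed
  moreover have "inj_on (\<lambda>(k,i,j). (i,j,k)) (SIGMA k:KS. SIGMA i:I k. {j. P i j k})" by (auto simp: inj_on_def)
  ultimately have "card {(i,j,k). P i j k} = card (SIGMA k:KS. SIGMA i:I k. {j. P i j k})" by (simp add: card_image)
  also have "\<dots> = (\<Sum>k\<in>KS. card (SIGMA i:I k. {j. P i j k}))"
    using assms by (intro card_SigmaI) (auto intro: finite_SigmaI)
  also have "\<dots> = (\<Sum>k\<in>KS. \<Sum>i\<in>I k. card {j. P i j k})"
    using assms by (intro sum.cong refl card_SigmaI) auto
  finally show ?thesis .
qed

context tctx
begin

lemma perm_len_w0: "perm_len n w0 = (n - a0) + first_col_len n mu \<sigma>"
proof -
  define X1 where "X1 = {(a,b). 1 \<le> a \<and> a < b \<and> b \<le> cp 1 \<and> \<sigma> b 1 < \<sigma> a 1}"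
  define Y where "Y = {i\<in>{1..n-1}. a0 < \<sigma> i 1}"
  define X2 where "X2 = (\<lambda>i. (i, n)) ` Y"
  have eq: "{(i,j). 1 \<le> i \<and> i < j \<and> j \<le> n \<and> w0 j < w0 i} = X1 \<union> X2"
  proof (rule set_eqI)
    fix x :: "nat \<times> nat"
    obtain i j where x: "x = (i,j)" by (cases x)
    show "x \<in> {(i,j). 1 \<le> i \<and> i < j \<and> j \<le> n \<and> w0 j < w0 i} \<longleftrightarrow> x \<in> X1 \<union> X2"
    proof (cases "j = n")
      case True
      then show ?thesis unfolding x X1_def X2_def Y_def cp1 using w0n n2
        by (auto simp: w0_def)
    next
      case False
      then show ?thesis unfolding x X1_def X2_def Y_def cp1 using n2
        by (auto simp: w0_def)
    qed
  qed
  have fin1: "finite X1"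
    by (rule finite_subset[of _ "{1..n} \<times> {1..n}"]) (use cp_le[of 1] in \<open>auto simp: X1_def\<close>)
  have fin2: "finite X2" unfolding X2_def Y_def by simp
  have disj: "X1 \<inter> X2 = {}" unfolding X1_def X2_def cp1 by auto
  have c1: "card X1 = first_col_len n mu \<sigma>" unfolding X1_def first_col_len_def by simp
  have "card X2 = card Y" unfolding X2_def by (rule card_image) (auto simp: inj_on_def)
  also have "card Y = card ((\<lambda>i. \<sigma> i 1) ` Y)"
    by (rule card_image[symmetric]) (rule inj_on_subset[OF col1_inj], auto simp: Y_def)
  also have "(\<lambda>i. \<sigma> i 1) ` Y = {Suc a0..n}"
  proof
    show "(\<lambda>i. \<sigma> i 1) ` Y \<subseteq> {Suc a0..n}"
    proof
      fix v assume "v \<in> (\<lambda>i. \<sigma> i 1) ` Y"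
      then obtain i where i: "i \<in> Y" "v = \<sigma> i 1" by auto
      then have "in_shape n mu i 1" using sh1 unfolding Y_def by auto
      then show "v \<in> {Suc a0..n}" using F_range[of i 1] i unfolding Y_def by auto
    qed
    show "{Suc a0..n} \<subseteq> (\<lambda>i. \<sigma> i 1) ` Y"
    proof
      fix v assume v: "v \<in> {Suc a0..n}"
      then have "v \<in> {1..n} - {a0}" by auto
      then have "v \<in> Img1" using missing by auto
      then obtain i where i: "i \<in> {1..n-1}" "v = \<sigma> i 1" by auto
      then show "v \<in> (\<lambda>i. \<sigma> i 1) ` Y" using v unfolding Y_def by auto
    qed
  qed
  finally have c2: "card X2 = n - a0" by simp
  have "perm_len n w0 = card (X1 \<union> X2)" unfolding perm_len_def eq ..
  also have "\<dots> = card X1 + card X2" using fin1 fin2 disj by (rule card_Un_disjoint)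
  finally show ?thesis using c1 c2 by simp
qed

end

lemma pointwise:
  fixes ai ac bi bc :: nat
  assumes "ai \<le> bi" "ac \<noteq> ai" "bi \<noteq> ac" "ck \<Longrightarrow> ac \<le> bc" "ck \<Longrightarrow> bc \<noteq> bi"
  shows "(if ac < bi \<and> (ck \<longrightarrow> bi < bc) then 1 else 0) + (if ck \<and> bc < bi then 1 else 0)
       = (if ai < ac \<and> ac < bi then 1 else 0) + (if ac < ai then (1::nat) else 0)"
  using assms by (cases ck) auto

context tctx
begin

definition dd :: "nat \<Rightarrow> nat \<Rightarrow> nat" where
  "dd j i = (if \<sigma> i (j - 1) \<noteq> \<sigma> i j then 1 else 0)"

definition Ac :: "nat \<Rightarrow> nat \<Rightarrow> nat" where
  "Ac j i = card {c. i < c \<and> c < Suc (cp (j - 1)) \<and> \<sigma> i (j - 1) < \<sigma> c (j - 1) \<and> \<sigma> c (j - 1) < \<sigma> i j}"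

lemma phi_eq: "phi t (\<lambda>i. \<sigma> i (j - 1)) (\<lambda>i. \<sigma> i j) (cp (j - 1)) i = (1 - t) ^ dd j i * t ^ Ac j i"
proof (cases "\<sigma> i (j - 1) = \<sigma> i j")
  case True
  then have "Ac j i = 0" unfolding Ac_def by auto
  then show ?thesis using True unfolding phi_def dd_def by simp
next
  case False then show ?thesis unfolding phi_def dd_def Ac_def by simp
qed

lemma prod_Phi:
  fixes t :: "'a::comm_ring_1"
  shows "(\<Prod>j\<in>{2..M}. Phi t j) = (1 - t) ^ (\<Sum>j\<in>{2..M}. \<Sum>i\<in>{1..cp j}. dd j i) * t ^ (\<Sum>j\<in>{2..M}. \<Sum>i\<in>{1..cp j}. Ac j i)"
  unfolding Phi_def phi_eq by (simp add: prod.distrib power_sum)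

lemma cp_zero: "M < j \<Longrightarrow> cp j = 0"
proof -
  assume j: "M < j"
  have "{i\<in>{1..n}. j \<le> mu i} = {}" using j mu_le[of 1] by fastforce
  then show ?thesis by (simp add: conj_part_def)
qed

lemma shift2: "(\<Sum>k\<in>{1..M-1}. g (Suc k)) = (\<Sum>j\<in>{2..M}. (g j :: nat))"
proof -
  have e: "{2..M} = {Suc 1..Suc (M - 1)}" using M_pos by auto
  show ?thesis unfolding e sum.shift_bounds_cl_Suc_ivl ..
qed

lemma des_eq: "des_fill n mu \<sigma> = (\<Sum>j\<in>{2..M}. \<Sum>i\<in>{1..cp j}. dd j i)"
proof -
  define P where "P = (\<lambda>i j. in_shape n mu i j \<and> in_shape n mu i (Suc j) \<and> \<sigma> i j < \<sigma> i (Suc j))"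
  have bnd: "\<forall>i j. P i j \<longrightarrow> j \<in> {1..M-1}"
  proof (intro allI impI)
    fix i j assume "P i j"
    then have a: "1 \<le> j" "1 \<le> i" "i \<le> cp (Suc j)" unfolding P_def in_shape_iff by auto
    then have "Suc j \<le> M" using cp_zero[of "Suc j"] by (cases "M < Suc j") auto
    then show "j \<in> {1..M-1}" using a by auto
  qed
  have fin: "\<forall>j\<in>{1..M-1}. finite {i. P i j}"
    by (auto intro: finite_subset[of _ "{1..n}"] simp: P_def in_shape_def)
  have "des_fill n mu \<sigma> = card {(i,j). P i j}" unfolding des_fill_def P_def ..
  also have "\<dots> = (\<Sum>j\<in>{1..M-1}. card {i. P i j})" by (rule card_pairs_snd[OF _ fin bnd]) simp
  also have "\<dots> = (\<Sum>j\<in>{1..M-1}. \<Sum>i\<in>{1..cp (Suc j)}. dd (Suc j) i)"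
  proof (rule sum.cong[OF refl])
    fix j assume j: "j \<in> {1..M-1}"
    have cpj: "cp (Suc j) \<le> cp j" using j by (intro cp_anti) auto
    have "{i. P i j} = {i\<in>{1..cp (Suc j)}. \<sigma> i (Suc j - 1) \<noteq> \<sigma> i (Suc j)}"
    proof (rule set_eqI)
      fix i
      show "i \<in> {i. P i j} \<longleftrightarrow> i \<in> {i\<in>{1..cp (Suc j)}. \<sigma> i (Suc j - 1) \<noteq> \<sigma> i (Suc j)}"
      proof
        assume "i \<in> {i. P i j}" then show "i \<in> {i\<in>{1..cp (Suc j)}. \<sigma> i (Suc j - 1) \<noteq> \<sigma> i (Suc j)}"
          unfolding P_def in_shape_iff by auto
      next
        assume i: "i \<in> {i\<in>{1..cp (Suc j)}. \<sigma> i (Suc j - 1) \<noteq> \<sigma> i (Suc j)}"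
        then have s1: "in_shape n mu i j" "in_shape n mu i (Suc j)" unfolding in_shape_iff using j cpj by auto
        then have "\<sigma> i j \<le> \<sigma> i (Suc j)" by (rule F_row)
        then show "i \<in> {i. P i j}" using s1 i unfolding P_def by auto
      qed
    qed
    then show "card {i. P i j} = (\<Sum>i\<in>{1..cp (Suc j)}. dd (Suc j) i)"
      unfolding dd_def by (simp only:) (rule card_filter_sum, simp)
  qed
  also have "\<dots> = (\<Sum>j\<in>{2..M}. \<Sum>i\<in>{1..cp j}. dd j i)"
    by (rule shift2[where g = "\<lambda>j. \<Sum>i\<in>{1..cp j}. dd j i"])
  finally show ?thesis .
qed

end

context tctx
begin

definition invc :: "nat \<Rightarrow> nat \<Rightarrow> nat" where
  "invc J i = card {c\<in>{Suc i..cp (J - 1)}. \<sigma> c (J - 1) < \<sigma> i J \<and> (c \<le> cp J \<longrightarrow> \<sigma> i J < \<sigma> c J)}"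

definition colinv :: "nat \<Rightarrow> nat" where
  "colinv j = (\<Sum>i\<in>{1..cp j}. card {c\<in>{Suc i..cp j}. \<sigma> c j < \<sigma> i j})"

lemma inv1: "inv_fill n mu \<sigma> = (\<Sum>J\<in>{2..M}. \<Sum>i\<in>{1..cp J}. invc J i)"
proof -
  define P where "P = (\<lambda>i j k. in_shape n mu i (Suc k) \<and> in_shape n mu j k \<and> i < j \<and>
      \<sigma> j k < \<sigma> i (Suc k) \<and> (in_shape n mu j (Suc k) \<longrightarrow> \<sigma> i (Suc k) < \<sigma> j (Suc k)))"
  have bnd: "\<forall>i j k. P i j k \<longrightarrow> k \<in> {1..M-1} \<and> i \<in> {1..cp (Suc k)}"
  proof (intro allI impI)
    fix i j k assume "P i j k"
    then have a: "1 \<le> k" "1 \<le> i" "i \<le> cp (Suc k)" unfolding P_def in_shape_iff by auto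
    then have "Suc k \<le> M" using cp_zero[of "Suc k"] by (cases "M < Suc k") auto
    then show "k \<in> {1..M-1} \<and> i \<in> {1..cp (Suc k)}" using a by auto
  qed
  have fin: "\<forall>k\<in>{1..M-1}. \<forall>i\<in>{1..cp (Suc k)}. finite {j. P i j k}"
    by (auto intro: finite_subset[of _ "{1..n}"] simp: P_def in_shape_def)
  have "inv_fill n mu \<sigma> = card {(i,j,k). P i j k}" unfolding inv_fill_def P_def ..
  also have "\<dots> = (\<Sum>k\<in>{1..M-1}. \<Sum>i\<in>{1..cp (Suc k)}. card {j. P i j k})"
    by (rule card_triples[OF _ _ fin bnd]) auto
  also have "\<dots> = (\<Sum>k\<in>{1..M-1}. \<Sum>i\<in>{1..cp (Suc k)}. invc (Suc k) i)"
  proof (intro sum.cong refl)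
    fix k i assume k: "k \<in> {1..M-1}" and i: "i \<in> {1..cp (Suc k)}"
    have "{j. P i j k} = {c\<in>{Suc i..cp (Suc k - 1)}. \<sigma> c (Suc k - 1) < \<sigma> i (Suc k) \<and> (c \<le> cp (Suc k) \<longrightarrow> \<sigma> i (Suc k) < \<sigma> c (Suc k))}"
      using k i unfolding P_def in_shape_iff by auto
    then show "card {j. P i j k} = invc (Suc k) i" unfolding invc_def by simp
  qed
  also have "\<dots> = (\<Sum>J\<in>{2..M}. \<Sum>i\<in>{1..cp J}. invc J i)"
    by (rule shift2[where g = "\<lambda>J. \<Sum>i\<in>{1..cp J}. invc J i"])
  finally show ?thesis .
qed

lemma fcl: "first_col_len n mu \<sigma> = colinv 1"
proof -
  have "first_col_len n mu \<sigma> = card {(a,b). 1 \<le> a \<and> a < b \<and> b \<le> cp 1 \<and> \<sigma> b 1 < \<sigma> a 1}"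
    unfolding first_col_len_def ..
  also have "\<dots> = (\<Sum>a\<in>{1..cp 1}. card {b. 1 \<le> a \<and> a < b \<and> b \<le> cp 1 \<and> \<sigma> b 1 < \<sigma> a 1})"
    by (rule card_pairs_fst) auto
  also have "\<dots> = colinv 1" unfolding colinv_def
    by (intro sum.cong refl arg_cong[where f = card]) auto
  finally show ?thesis .
qed

lemma colM: "colinv M = 0"
  unfolding colinv_def cpM by simp

lemma key:
  assumes J: "2 \<le> J" "J \<le> M"
  shows "(\<Sum>i\<in>{1..cp J}. invc J i) + colinv J = (\<Sum>i\<in>{1..cp J}. Ac J i) + colinv (J - 1)"
proof -
  define k where "k = cp J"
  define K where "K = cp (J - 1)"
  define a where "a = (\<lambda>c. \<sigma> c (J - 1))"
  define b where "b = (\<lambda>c. \<sigma> c J)"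
  have kK: "k \<le> K" unfolding k_def K_def using J by (intro cp_anti) auto
  have Kk: "K \<le> Suc k" unfolding k_def K_def using cp_step[of "J - 1"] J by simp
  have jj: "Suc (J - 1) = J" using J by simp
  have j1: "1 \<le> J - 1" using J by simp
  have shK: "in_shape n mu c (J - 1) \<longleftrightarrow> 1 \<le> c \<and> c \<le> K" for c
    unfolding in_shape_iff K_def using j1 by simp
  have shk: "in_shape n mu c J \<longleftrightarrow> 1 \<le> c \<and> c \<le> k" for c
    unfolding in_shape_iff k_def using J by simp
  have per_i: "invc J i + card {c\<in>{Suc i..k}. b c < b i} = Ac J i + card {c\<in>{Suc i..K}. a c < a i}"
    if i: "i \<in> {1..k}" for i
  proof -
    define C where "C = {Suc i..K}"
    have e1: "invc J i = (\<Sum>c\<in>C. if a c < b i \<and> (c \<le> k \<longrightarrow> b i < b c) then 1 else 0)"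
      unfolding invc_def C_def a_def b_def k_def K_def by (rule card_filter_sum) simp
    have "{c\<in>{Suc i..k}. b c < b i} = {c\<in>C. c \<le> k \<and> b c < b i}" unfolding C_def using kK by auto
    then have e2: "card {c\<in>{Suc i..k}. b c < b i} = (\<Sum>c\<in>C. if c \<le> k \<and> b c < b i then 1 else 0)"
      by (simp only:) (rule card_filter_sum, simp add: C_def)
    have "{c. i < c \<and> c < Suc (cp (J - 1)) \<and> \<sigma> i (J - 1) < \<sigma> c (J - 1) \<and> \<sigma> c (J - 1) < \<sigma> i J}
        = {c\<in>C. a i < a c \<and> a c < b i}" unfolding C_def a_def b_def K_def by auto
    then have e3: "Ac J i = (\<Sum>c\<in>C. if a i < a c \<and> a c < b i then 1 else 0)"
      unfolding Ac_def by (simp only:) (rule card_filter_sum, simp add: C_def)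
    have e4: "card {c\<in>{Suc i..K}. a c < a i} = (\<Sum>c\<in>C. if a c < a i then 1 else 0)"
      unfolding C_def by (rule card_filter_sum) simp
    have pw: "(if a c < b i \<and> (c \<le> k \<longrightarrow> b i < b c) then 1 else 0) + (if c \<le> k \<and> b c < b i then 1 else 0)
       = (if a i < a c \<and> a c < b i then 1 else 0) + (if a c < a i then (1::nat) else 0)"
      if c: "c \<in> C" for c
    proof (rule pointwise)
      have si: "in_shape n mu i (J - 1)" "in_shape n mu i (Suc (J - 1))" using shK shk i kK jj by auto
      show "a i \<le> b i" using F_row[OF si] jj unfolding a_def b_def by simp
      have sc: "in_shape n mu c (J - 1)" using shK c i unfolding C_def by auto
      show "a c \<noteq> a i" using F_col[OF sc si(1)] c unfolding C_def a_def by auto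
      show "b i \<noteq> a c" using F_att[OF sc si(2)] c jj unfolding C_def a_def b_def by auto
      assume ck: "c \<le> k"
      have sc2: "in_shape n mu c J" using shk ck c i unfolding C_def by auto
      show "a c \<le> b c" using F_row[of c "J - 1"] sc sc2 jj unfolding a_def b_def by simp
      show "b c \<noteq> b i" using F_col[OF sc2] si(2) jj c unfolding C_def b_def by auto
    qed
    show ?thesis unfolding e1 e2 e3 e4 sum.distrib[symmetric] using pw by (rule sum.cong[OF refl])
  qed
  have "colinv (J - 1) = (\<Sum>i\<in>{1..K}. card {c\<in>{Suc i..K}. a c < a i})"
    unfolding colinv_def K_def a_def ..
  also have "\<dots> = (\<Sum>i\<in>{1..k}. card {c\<in>{Suc i..K}. a c < a i})"
  proof (rule sum.mono_neutral_right)
    show "\<forall>i\<in>{1..K} - {1..k}. card {c\<in>{Suc i..K}. a c < a i} = 0" using Kk by auto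
  qed (use kK in auto)
  finally have cK: "colinv (J - 1) = (\<Sum>i\<in>{1..k}. card {c\<in>{Suc i..K}. a c < a i})" .
  have cJ: "colinv J = (\<Sum>i\<in>{1..k}. card {c\<in>{Suc i..k}. b c < b i})"
    unfolding colinv_def k_def b_def ..
  show ?thesis
    unfolding cK cJ k_def[symmetric] sum.distrib[symmetric] using per_i by (rule sum.cong[OF refl])
qed

lemma inv_eq: "inv_fill n mu \<sigma> = first_col_len n mu \<sigma> + (\<Sum>j\<in>{2..M}. \<Sum>i\<in>{1..cp j}. Ac j i)"
proof -
  define IV where "IV = (\<lambda>J. \<Sum>i\<in>{1..cp J}. invc J i)"
  define AA where "AA = (\<lambda>J. \<Sum>i\<in>{1..cp J}. Ac J i)"
  have k: "IV J + colinv J = AA J + colinv (J - 1)" if "J \<in> {2..M}" for J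
    unfolding IV_def AA_def using key that by auto
  have s1: "sum IV {2..M} + sum colinv {2..M} = sum AA {2..M} + (\<Sum>J\<in>{2..M}. colinv (J - 1))"
    unfolding sum.distrib[symmetric] using k by (rule sum.cong[OF refl])
  have s2: "(\<Sum>J\<in>{2..M}. colinv (J - 1)) = (\<Sum>j\<in>{1..M-1}. colinv j)"
    using shift2[where g = "\<lambda>J. colinv (J - 1)"] by simp
  have s3: "sum colinv {1..M} = colinv 1 + sum colinv {2..M}"
    using sum.atLeast_Suc_atMost[OF M_pos, of colinv] by (simp add: numeral_2_eq_2)
  have s4: "sum colinv {1..M} = sum colinv {1..M-1} + colinv M"
  proof -
    have "M = Suc (M - 1)" using M_pos by simp
    then have e: "{1..M} = insert M {1..M-1}" by auto
    have nm: "M \<notin> {1..M-1}" using M_pos by auto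
    show ?thesis unfolding e using nm by (simp add: add.commute)
  qed
  have "inv_fill n mu \<sigma> = sum IV {2..M}" unfolding inv1 IV_def ..
  then show ?thesis using s1 s2 s3 s4 colM fcl unfolding AA_def by linarith
qed

end

context tctx
begin

lemma main:
  fixes t :: "'a::comm_ring_1"
  shows "(\<Sum>(w,T) \<in> fiber n mu \<sigma>.
            (-1) ^ perm_len n (wT n mu w T)
          * t ^ ((perm_len n w + perm_len n (wT n mu w T) - card T) div 2)
          * (t - 1) ^ card T)
       = (-1) ^ (n - missing_entry n mu \<sigma> + first_col_len n mu \<sigma>)
          * t ^ (n - missing_entry n mu \<sigma> + inv_fill n mu \<sigma>)
          * (1 - t) ^ des_fill n mu \<sigma>"
proof -
  define E0 where "E0 = (\<lambda>v. if chkF n mu \<sigma> (length (alcove_chain n mu)) v then 1 else (0::'a))"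
  define X where "X = (\<Prod>j\<in>{2..M}. Phi t j)"
  have be_ok: "\<forall>j. 1 \<le> j \<and> j \<le> M \<longrightarrow> be j \<le> length (alcove_chain n mu)"
    using be_le alc_len by auto
  have sh_ok: "\<forall>i j. in_shape n mu i j \<longrightarrow> 1 \<le> j \<and> j \<le> M"
  proof (intro allI impI)
    fix i j assume "in_shape n mu i j"
    then have a: "1 \<le> j" "1 \<le> i" "i \<le> cp j" unfolding in_shape_iff by auto
    then have "j \<le> M" using cp_zero[of j] by (cases "M < j") auto
    then show "1 \<le> j \<and> j \<le> M" using a by simp
  qed
  have alc: "alcove_chain n mu = Sfx 2"
  proof -
    have "[1..<M+1] = 1 # [2..<Suc M]" using M_pos by (simp add: upt_conv_Cons numeral_2_eq_2)
    then show ?thesis unfolding alcove_chain_def Sfx_def using cb1 by simp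
  qed
  have R: "Rf t E0 (chkF n mu \<sigma>) (alcove_chain n mu) 0 w = (if colok 1 w then X else 0)"
    if w: "w permutes {1..n}" for w
  proof -
    have "Rf t E0 (chkF n mu \<sigma>) (Sfx 2) (be (2 - 1)) w = (if colok (2 - 1) w then X else 0)"
      using suffix[of 2 t] M_pos w unfolding E0_def X_def by auto
    then show ?thesis using alc be1 by simp
  qed
  have "(\<Sum>(w,T) \<in> fiber n mu \<sigma>.
            (-1) ^ perm_len n (wT n mu w T)
          * t ^ ((perm_len n w + perm_len n (wT n mu w T) - card T) div 2)
          * (t - 1) ^ card T)
      = (\<Sum>w\<in>{w. w permutes {1..n}}. (- t) ^ perm_len n w * Rf t E0 (chkF n mu \<sigma>) (alcove_chain n mu) 0 w)"
    unfolding E0_def by (rule fiber_sum[OF alc_valid be_ok sh_ok])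
  also have "\<dots> = (\<Sum>w\<in>{w. w permutes {1..n}}. (- t) ^ perm_len n w * (if colok 1 w then X else 0))"
    using R by (intro sum.cong refl) auto
  also have "\<dots> = (- t) ^ perm_len n w0 * X" by (rule sum_w0)
  also have "\<dots> = (-1) ^ (n - a0 + first_col_len n mu \<sigma>) * t ^ (n - a0 + first_col_len n mu \<sigma>) *
      ((1 - t) ^ des_fill n mu \<sigma> * t ^ (\<Sum>j\<in>{2..M}. \<Sum>i\<in>{1..cp j}. Ac j i))"
    unfolding perm_len_w0 X_def prod_Phi des_eq[symmetric] power_minus[of t] by (simp only: mult.assoc)
  also have "\<dots> = (-1) ^ (n - a0 + first_col_len n mu \<sigma>) * t ^ (n - a0 + inv_fill n mu \<sigma>) * (1 - t) ^ des_fill n mu \<sigma>"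
    unfolding inv_eq by (simp add: power_add mult_ac)
  finally show ?thesis unfolding a0_def .
qed

end

lemma case_n1:
  fixes lam :: "nat \<Rightarrow> nat" and \<sigma> :: "nat \<Rightarrow> nat \<Rightarrow> nat" and t :: "'a :: comm_ring_1"
  assumes "lam 1 = 0"
  shows "(\<Sum>(w,T) \<in> fiber 1 (lam_rho 1 lam) \<sigma>.
            (-1) ^ perm_len 1 (wT 1 (lam_rho 1 lam) w T)
          * t ^ ((perm_len 1 w + perm_len 1 (wT 1 (lam_rho 1 lam) w T) - card T) div 2)
          * (t - 1) ^ card T)
       = (-1) ^ (1 - missing_entry 1 (lam_rho 1 lam) \<sigma> + first_col_len 1 (lam_rho 1 lam) \<sigma>)
          * t ^ (1 - missing_entry 1 (lam_rho 1 lam) \<sigma> + inv_fill 1 (lam_rho 1 lam) \<sigma>)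
          * (1 - t) ^ des_fill 1 (lam_rho 1 lam) \<sigma>"
proof -
  define mu where "mu = lam_rho 1 lam"
  have mu1: "mu 1 = 0" using assms by (simp add: mu_def lam_rho_def)
  have nosh: "\<not> in_shape 1 mu i j" for i j
  proof
    assume "in_shape 1 mu i j"
    then have "i = 1" "1 \<le> j" "j \<le> mu i" by (auto simp: in_shape_def)
    then show False using mu1 by simp
  qed
  have nosh': "\<not> in_shape (Suc 0) mu i j" for i j using nosh[of i j] by simp
  have alc: "alcove_chain 1 mu = []" using mu1 by (simp add: alcove_chain_def)
  have fib: "fiber 1 mu \<sigma> = {(id, {})}"
  proof
    show "fiber 1 mu \<sigma> \<subseteq> {(id, {})}"
      unfolding fiber_def admissible_def alc by auto
    have "(id, {}) \<in> admissible 1 mu" unfolding admissible_def alc by (simp add: permutes_id)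
    then show "{(id, {})} \<subseteq> fiber 1 mu \<sigma>" unfolding fiber_def using nosh by auto
  qed
  have pl: "perm_len 1 w = 0" for w
    unfolding perm_len_def by (rule card_eq_0_iff[THEN iffD2]) auto
  have me: "missing_entry 1 mu \<sigma> = 1"
    unfolding missing_entry_def by (rule the_equality) (auto simp: nosh nosh')
  have cp1: "conj_part 1 mu 1 = 0" unfolding conj_part_def using mu1 by auto
  have fcl: "first_col_len 1 mu \<sigma> = 0" unfolding first_col_len_def cp1
    by (rule card_eq_0_iff[THEN iffD2]) auto
  have e3: "{(i::nat, j::nat, k::nat). False} = {}" by auto
  have inv: "inv_fill 1 mu \<sigma> = 0" unfolding inv_fill_def using nosh by (simp add: e3)
  have des: "des_fill 1 mu \<sigma> = 0" unfolding des_fill_def using nosh by simp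
  show ?thesis unfolding mu_def[symmetric] fib using pl me fcl inv des by simp
qed

theorem theorem3p1:
  fixes n :: nat and lam :: "nat \<Rightarrow> nat" and \<sigma> :: "nat \<Rightarrow> nat \<Rightarrow> nat"
    and t :: "'a :: comm_ring_1"
  assumes "1 \<le> n"
    and "\<forall>i. 1 \<le> i \<and> i < n \<longrightarrow> lam (Suc i) \<le> lam i"
    and "lam n = 0"
    and "\<sigma> \<in> fillings_F n (lam_rho n lam)"
  shows "(\<Sum>(w,T) \<in> fiber n (lam_rho n lam) \<sigma>.
            (-1) ^ perm_len n (wT n (lam_rho n lam) w T)
          * t ^ ((perm_len n w + perm_len n (wT n (lam_rho n lam) w T) - card T) div 2)
          * (t - 1) ^ card T)
       = (-1) ^ (n - missing_entry n (lam_rho n lam) \<sigma> + first_col_len n (lam_rho n lam) \<sigma>)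
          * t ^ (n - missing_entry n (lam_rho n lam) \<sigma> + inv_fill n (lam_rho n lam) \<sigma>)
          * (1 - t) ^ des_fill n (lam_rho n lam) \<sigma>"
proof (cases "n = 1")
  case True
  then have l1: "lam 1 = 0" using assms(3) by simp
  show ?thesis using case_n1[where t = t and lam = lam, OF l1] True by simp
next
  case False
  then have "2 \<le> n" using assms(1) by simp
  then interpret tctx n lam \<sigma> using assms by unfold_locales auto
  show ?thesis by (rule main)
qed

end
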